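(* For $n\ge2$ and $1\le r\le n-1$ let $N(n,r)$ be the number of triples $(\alpha,\beta,\gamma)\in\mathbb{Z}_2^n\times\mathbb{Z}_2^n\times\mathbb{Z}_2^n$ with $\mathrm{adp}^{\mathrm{XR}}_r(\alpha,\beta\to\gamma)=0$. Then: (1) for $2\le r\le n-2$, $N(n,r)\le\left(\frac17+\frac{1}{2^{r+1}}\right)8^n-\frac17 8^r+\frac47(8^{r-1}-1)\left(\frac15 8^{n-r}+7\cdot4^{n-r}-\frac{124}{5}3^{n-r-2}\right)$; (2) $N(n,n-1)\le\left(\frac{9}{28}+\frac{1}{2^n}\right)8^n-\frac{88}{7}$; (3) $N(n,r)\ge\frac17 8^n-\frac17 8^r$ for every $1\le r\le n-1$; (4) $N(n,1)=\frac{5}{14}8^n-\frac67$ for every $n\ge2$.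
   Context: For $x\in\mathbb{Z}_2^n$, $x=(x_0,\dots,x_{n-1})$ is identified with the integer $\sum_i x_i2^{n-1-i}$; $+$ is addition modulo $2^n$, $\oplus$ is bitwise XOR, $x\lll r=(x_r,\dots,x_{n-1},x_0,\dots,x_{r-1})$. $\mathrm{adp}^{\mathrm{XR}}_r(\alpha,\beta\to\gamma)=4^{-n}\#\{(x,y)\in(\mathbb{Z}_2^n)^2: ((x+\alpha)\oplus(y+\beta))\lll r=((x\oplus y)\lll r)+\gamma\}$. *)

theory Defs
  imports Complex_Main
begin

text \<open>Elements of Z_2^n are represented as natural numbers x < 2^n, where the bit
  vector (x_0,...,x_{n-1}) corresponds to the integer sum_i x_i 2^(n-1-i), i.e. x_0 is the
  most significant bit.\<close>

definition rotl :: "nat \<Rightarrow> nat \<Rightarrow> nat \<Rightarrow> nat" where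
  "rotl n r x = (x * 2 ^ r) mod 2 ^ n + x div 2 ^ (n - r)"

definition adpXR :: "nat \<Rightarrow> nat \<Rightarrow> nat \<Rightarrow> nat \<Rightarrow> nat \<Rightarrow> real" where
  "adpXR n r \<alpha> \<beta> \<gamma> =
     real (card {(x, y). x < 2 ^ n \<and> y < 2 ^ n \<and>
        rotl n r (xor ((x + \<alpha>) mod 2 ^ n) ((y + \<beta>) mod 2 ^ n))
          = (rotl n r (xor x y) + \<gamma>) mod 2 ^ n}) / 4 ^ n"

definition Nzero :: "nat \<Rightarrow> nat \<Rightarrow> nat" where
  "Nzero n r = card {(\<alpha>, \<beta>, \<gamma>). \<alpha> < 2 ^ n \<and> \<beta> < 2 ^ n \<and> \<gamma> < 2 ^ n \<and>
                       adpXR n r \<alpha> \<beta> \<gamma> = 0}"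

end

theory Submission
  imports Defs
begin

type_synonym st = "bool \<times> bool \<times> bool"

fun par :: "st \<Rightarrow> bool" where "par (a,b,c) = (a \<noteq> (b \<noteq> c))"
definition maj :: "bool \<Rightarrow> bool \<Rightarrow> bool \<Rightarrow> bool" where
  "maj a b c = (a \<and> b \<or> a \<and> c \<or> b \<and> c)"
fun tr3 :: "st \<Rightarrow> st \<Rightarrow> bool \<Rightarrow> bool \<Rightarrow> st" where
  "tr3 (c1,c2,c3) (a,b,g) x y = (maj x a c1, maj y b c2, maj (x \<noteq> y) g c3)"

definition dl :: "st \<Rightarrow> st set \<Rightarrow> st set" where
  "dl u S = {t. \<exists>s\<in>S. par s = par u \<and> (\<exists>x y. t = tr3 s u x y)}"

fun reach :: "st list \<Rightarrow> st set \<Rightarrow> st set" where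
  "reach [] S = S"
| "reach (u#us) S = reach us (dl u S)"

type_synonym ost = "bool option \<times> bool option \<times> bool option"

fun Uo :: "ost \<Rightarrow> st set" where
  "Uo (q1,q2,q3) = {(a,b,c). q1 = Some a \<or> q2 = Some b \<or> q3 = Some c}"

fun stepo :: "st \<Rightarrow> ost \<Rightarrow> ost" where
  "stepo (a,b,g) (q1,q2,q3) =
    ((if q1 = Some a \<or> q2 = Some (\<not>b) \<or> q3 = Some (\<not>g) then Some a else None),
     (if q2 = Some b \<or> q1 = Some (\<not>a) \<or> q3 = Some (\<not>g) then Some b else None),
     (if q3 = Some g \<or> q1 = Some (\<not>a) \<or> q2 = Some (\<not>b) then Some g else None))"

fun agree :: "st \<Rightarrow> st \<Rightarrow> ost" where
  "agree (s1,s2,s3) (a,b,g) =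
     (if s1 = a then (Some a, None, None) else if s2 = b then (None, Some b, None)
      else (None, None, Some g))"

lemma mem_dl: "t \<in> dl u S \<longleftrightarrow> (\<exists>s\<in>S. par s = par u \<and> (\<exists>x y. t = tr3 s u x y))"
  by (simp add: dl_def)

lemma dl_pl1: "(t1,t2,t3) \<in> dl (a,b,g) {(x,y,z). x = v} \<longleftrightarrow> (if a = v then t1 = v else t2 = b \<or> t3 = g)"
  unfolding mem_dl Bex_def split_paired_Ex mem_Collect_eq case_prod_conv
  by (simp add: ex_bool_eq maj_def; cases a; cases v; simp; cases b; cases g; simp; blast)

lemma dl_pl2: "(t1,t2,t3) \<in> dl (a,b,g) {(x,y,z). y = v} \<longleftrightarrow> (if b = v then t2 = v else t1 = a \<or> t3 = g)"
  unfolding mem_dl Bex_def split_paired_Ex mem_Collect_eq case_prod_conv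
  by (simp add: ex_bool_eq maj_def; cases b; cases v; simp; cases a; cases g; simp; blast)

lemma dl_pl3: "(t1,t2,t3) \<in> dl (a,b,g) {(x,y,z). z = v} \<longleftrightarrow> (if g = v then t3 = v else t1 = a \<or> t2 = b)"
  unfolding mem_dl Bex_def split_paired_Ex mem_Collect_eq case_prod_conv
  by (simp add: ex_bool_eq maj_def; cases g; cases v; simp; cases a; cases b; simp; blast)

lemma dl_Un: "dl u (A \<union> B) = dl u A \<union> dl u B" unfolding dl_def by auto
lemma dl_empty[simp]: "dl u {} = {}" unfolding dl_def by auto

fun op1 :: "bool option \<Rightarrow> st set" where "op1 None = {}" | "op1 (Some v) = {(x,y,z). x = v}"
fun op2 :: "bool option \<Rightarrow> st set" where "op2 None = {}" | "op2 (Some v) = {(x,y,z). y = v}"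
fun op3 :: "bool option \<Rightarrow> st set" where "op3 None = {}" | "op3 (Some v) = {(x,y,z). z = v}"

lemma Uo_split: "Uo (q1,q2,q3) = op1 q1 \<union> op2 q2 \<union> op3 q3"
  by (cases q1; cases q2; cases q3) auto

lemma dl_U: "dl u (Uo q) = Uo (stepo u q)"
proof (rule set_eqI)
  fix t :: st
  obtain a b g where u: "u = (a,b,g)" by (cases u)
  obtain q1 q2 q3 where q: "q = (q1,q2,q3)" by (cases q)
  obtain t1 t2 t3 where t: "t = (t1,t2,t3)" by (cases t)
  show "t \<in> dl u (Uo q) \<longleftrightarrow> t \<in> Uo (stepo u q)"
    unfolding u q t Uo_split dl_Un Un_iff
    by (cases q1; cases q2; cases q3; simp add: dl_pl1 dl_pl2 dl_pl3; auto)
qed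

lemma dl_single: "dl u {s} = (if par s \<noteq> par u then {} else if s = u then {u} else Uo (agree s u))"
proof (rule set_eqI)
  fix t :: st
  obtain a b g where u: "u = (a,b,g)" by (cases u)
  obtain s1 s2 s3 where s: "s = (s1,s2,s3)" by (cases s)
  obtain t1 t2 t3 where t: "t = (t1,t2,t3)" by (cases t)
  show "t \<in> dl u {s} \<longleftrightarrow> t \<in> (if par s \<noteq> par u then {} else if s = u then {u} else Uo (agree s u))"
    unfolding u s t mem_dl
    by (cases a; cases b; cases g; cases s1; cases s2; cases s3) (auto simp add: ex_bool_eq maj_def)
qed

lemma dl_mono: "S \<subseteq> T \<Longrightarrow> dl u S \<subseteq> dl u T" unfolding dl_def by blast

lemma reach_mono: "S \<subseteq> T \<Longrightarrow> reach xs S \<subseteq> reach xs T"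
proof (induction xs arbitrary: S T)
  case Nil then show ?case by simp
next
  case (Cons u xs)
  show ?case using Cons.IH[OF dl_mono[OF Cons.prems]] by simp
qed

lemma reach_empty[simp]: "reach xs {} = {}" by (induction xs) auto

lemma dl_UN_gen: "dl u (\<Union>i\<in>I. A i) = (\<Union>i\<in>I. dl u (A i))" unfolding dl_def by auto

lemma reach_UN_gen: "reach xs (\<Union>i\<in>I. A i) = (\<Union>i\<in>I. reach xs (A i))"
  by (induction xs arbitrary: A) (auto simp: dl_UN_gen)

lemma reach_UN: "reach xs S = (\<Union>s\<in>S. reach xs {s})"
  using reach_UN_gen[of xs "\<lambda>s. {s}" S] by simp

fun foldo :: "st list \<Rightarrow> ost \<Rightarrow> ost" where
  "foldo [] q = q" | "foldo (u#us) q = foldo us (stepo u q)"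

lemma reach_Uo: "reach xs (Uo q) = Uo (foldo xs q)"
  by (induction xs arbitrary: q) (auto simp: dl_U)

definition hasA :: "ost \<Rightarrow> bool" where "hasA q \<longleftrightarrow> fst q \<noteq> None \<or> fst (snd q) \<noteq> None"

lemma hasA_step: "hasA q \<Longrightarrow> hasA (stepo u q)"
proof -
  assume h: "hasA q"
  obtain a b g where u: "u = (a,b,g)" by (cases u)
  obtain q1 q2 q3 where q: "q = (q1,q2,q3)" by (cases q)
  show ?thesis using h unfolding u q hasA_def by (cases q1; cases q2; auto)
qed

lemma hasA_fold: "hasA q \<Longrightarrow> hasA (foldo xs q)"
  by (induction xs arbitrary: q) (auto simp: hasA_step)

lemma hasA_mem: "hasA q \<Longrightarrow> \<exists>d1 d2. (d1,d2,c) \<in> Uo q"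
proof -
  assume h: "hasA q"
  obtain q1 q2 q3 where q: "q = (q1,q2,q3)" by (cases q)
  show ?thesis using h unfolding q hasA_def by (cases q1; cases q2; auto)
qed

definition gz :: "st list \<Rightarrow> bool" where "gz xs \<longleftrightarrow> (\<forall>u\<in>set xs. \<not> snd (snd u))"

lemma fold3: "(foldo xs (None,None,Some False) = (None,None,Some False) \<and> gz xs) \<or> hasA (foldo xs (None,None,Some False))"
proof (induction xs)
  case Nil then show ?case by (simp add: gz_def)
next
  case (Cons u xs)
  obtain a b g where u: "u = (a,b,g)" by (cases u)
  show ?case
  proof (cases g)
    case True
    then have "hasA (stepo u (None,None,Some False))" unfolding u hasA_def by simp
    then show ?thesis using hasA_fold by simp
  next
    case False
    then have "stepo u (None,None,Some False) = (None,None,Some False)" unfolding u by simp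
    then show ?thesis using Cons False u by (simp add: gz_def)
  qed
qed

lemma agree_cases:
  assumes "par s = par u" "s \<noteq> u" "\<not> snd (snd s)"
  shows "hasA (agree s u) \<or> (agree s u = (None,None,Some False) \<and> \<not> snd (snd u))"
proof -
  obtain a b g where u: "u = (a,b,g)" by (cases u)
  obtain s1 s2 s3 where s: "s = (s1,s2,s3)" by (cases s)
  show ?thesis using assms unfolding u s hasA_def
    by (cases a; cases b; cases g; cases s1; cases s2; cases s3; simp)
qed

lemma plane_case:
  assumes "s \<in> R" "\<not> snd (snd s)" "par s = par u" "s \<noteq> u"
    and fail: "\<forall>d1 d2. (d1,d2,c0) \<notin> reach (u#rest) R"
  shows "c0 \<and> gz (u#rest)"
proof -
  have "dl u {s} \<subseteq> dl u R" using assms(1) by (intro dl_mono) auto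
  then have "reach rest (dl u {s}) \<subseteq> reach rest (dl u R)" by (rule reach_mono)
  then have sub: "Uo (foldo rest (agree s u)) \<subseteq> reach (u#rest) R"
    using assms(3,4) by (simp add: dl_single reach_Uo)
  have nA: "\<not> hasA (foldo rest (agree s u))"
  proof
    assume "hasA (foldo rest (agree s u))"
    then obtain d1 d2 where "(d1,d2,c0) \<in> Uo (foldo rest (agree s u))" using hasA_mem by blast
    then show False using sub fail by blast
  qed
  then have ag: "agree s u = (None,None,Some False)" and ug: "\<not> snd (snd u)"
    using agree_cases[OF assms(3,4,2)] hasA_fold by blast+
  then have "foldo rest (None,None,Some False) = (None,None,Some False) \<and> gz rest"
    using fold3[of rest] nA by auto
  then have "(False,False,False) \<in> reach (u#rest) R" using sub ag by auto
  then have "c0" using fail by (cases c0) auto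
  then show ?thesis using ug \<open>foldo rest (None,None,Some False) = (None,None,Some False) \<and> gz rest\<close>
    by (simp add: gz_def)
qed

lemma Hs:
  assumes "\<not> snd (snd s)" "\<forall>d1 d2. (d1,d2,c0) \<notin> reach xs {s}"
  shows "reach xs {s} = {} \<or> (c0 \<and> gz xs)"
  using assms
proof (induction xs arbitrary: s)
  case Nil
  then obtain s1 s2 where s: "s = (s1,s2,False)" by (cases s) auto
  then show ?case using Nil by (cases c0) (auto simp: gz_def)
next
  case (Cons u xs)
  show ?case
  proof (cases "par s = par u")
    case False
    then show ?thesis by (simp add: dl_single)
  next
    case pe: True
    show ?thesis
    proof (cases "s = u")
      case True
      then have "reach (u#xs) {s} = reach xs {u}" by (simp add: dl_single)
      then show ?thesis using Cons.IH[of u] Cons.prems True by (auto simp: gz_def)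
    next
      case False
      then show ?thesis using plane_case[of s "{s}" u c0 xs] Cons.prems pe by auto
    qed
  qed
qed

lemma Hmain:
  assumes "\<forall>s\<in>R. \<not> snd (snd s)" "\<forall>d1 d2. (d1,d2,c0) \<notin> reach xs R"
  shows "(c0 \<and> gz xs) \<or> R = {} \<or> (\<exists>u rest. xs = u#rest \<and> (\<forall>s\<in>R. par s \<noteq> par u))
     \<or> (\<exists>u rest. xs = u#rest \<and> u \<in> R \<and> (\<forall>s\<in>R. par s = par u \<longrightarrow> s = u) \<and> reach rest {u} = {})"
proof (cases xs)
  case Nil
  show ?thesis
  proof (cases c0)
    case True then show ?thesis using Nil by (simp add: gz_def)
  next
    case False
    have "R = {}"
    proof (rule ccontr)
      assume "R \<noteq> {}"
      then obtain s1 s2 s3 where "(s1,s2,s3) \<in> R" by auto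
      then show False using assms Nil False by force
    qed
    then show ?thesis by simp
  qed
next
  case (Cons u rest)
  show ?thesis
  proof (cases "\<exists>s\<in>R. par s = par u \<and> s \<noteq> u")
    case True
    then obtain s where "s \<in> R" "par s = par u" "s \<noteq> u" by blast
    then show ?thesis using plane_case[of s R u c0 rest] assms Cons by auto
  next
    case nf: False
    show ?thesis
    proof (cases "\<exists>s\<in>R. par s = par u")
      case False then show ?thesis using Cons by auto
    next
      case True
      then have uR: "u \<in> R" using nf by blast
      have "dl u R = (\<Union>s\<in>R. dl u {s})" unfolding dl_def by auto
      also have "\<dots> = {u}"
      proof -
        have "\<And>s. s \<in> R \<Longrightarrow> dl u {s} = (if s = u then {u} else {})"
          using nf by (auto simp: dl_single)
        then show ?thesis using uR by auto
      qed
      finally have dR: "dl u R = {u}" .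
      have u3: "\<not> snd (snd u)" using uR assms(1) by blast
      have "\<forall>d1 d2. (d1,d2,c0) \<notin> reach rest {u}" using assms(2) Cons dR by simp
      from Hs[OF u3 this] show ?thesis
        using Cons uR nf u3 by (auto simp: gz_def)
    qed
  qed
qed

datatype ast = Dd | Sg st | Pq ost

fun conc :: "ast \<Rightarrow> st set" where
  "conc Dd = {}" | "conc (Sg s) = {s}" | "conc (Pq q) = Uo q"

fun astep :: "st \<Rightarrow> ast \<Rightarrow> ast" where
  "astep u Dd = Dd"
| "astep u (Sg s) = (if par s \<noteq> par u then Dd else if s = u then Sg s else Pq (agree s u))"
| "astep u (Pq q) = Pq (stepo u q)"

lemma dl_conc: "dl u (conc a) = conc (astep u a)"
  by (cases a) (auto simp: dl_single dl_U)

fun afold :: "st list \<Rightarrow> ast \<Rightarrow> ast" where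
  "afold [] a = a" | "afold (u#us) a = afold us (astep u a)"

lemma reach_conc: "reach xs (conc a) = conc (afold xs a)"
  by (induction xs arbitrary: a) (auto simp: dl_conc)

lemma afold_Dd[simp]: "afold xs Dd = Dd" by (induction xs) auto

datatype cls = CD | CS | CT2 | CF4 | CT3 | CF6 | CF7

fun qcls :: "ost \<Rightarrow> cls" where
  "qcls (q1,q2,q3) = (if q3 = None then (if q1 = None then (if q2 = None then CD else CT2)
        else (if q2 = None then CT2 else CT3))
      else (if q1 = None \<and> q2 = None then CF4 else if q1 \<noteq> None \<and> q2 \<noteq> None then CF7 else CF6))"

fun acls :: "ast \<Rightarrow> cls" where
  "acls Dd = CD" | "acls (Sg s) = CS" | "acls (Pq q) = qcls q"

fun G :: "nat \<Rightarrow> (cls \<Rightarrow> nat) \<Rightarrow> cls \<Rightarrow> nat" where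
  "G 0 w c = w c"
| "G (Suc j) w c = (case c of CD \<Rightarrow> 8 * G j w CD
     | CS \<Rightarrow> 4 * G j w CD + G j w CF4 + G j w CS + 2 * G j w CT2
     | CT2 \<Rightarrow> 4 * G j w CT2 + 4 * G j w CF6
     | CF4 \<Rightarrow> 4 * G j w CF4 + 4 * G j w CT3
     | CT3 \<Rightarrow> 4 * G j w CF6 + 2 * G j w CF7 + 2 * G j w CT3
     | CF6 \<Rightarrow> 4 * G j w CF6 + 2 * G j w CF7 + 2 * G j w CT3
     | CF7 \<Rightarrow> 2 * G j w CF6 + 5 * G j w CF7 + G j w CT3)"

lemma sum_st: "(\<Sum>u\<in>(UNIV::st set). f u) =
  f (False,False,False) + f (False,False,True) + f (False,True,False) + f (False,True,True) +
  f (True,False,False) + f (True,False,True) + f (True,True,False) + f (True,True,True)"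
proof -
  have "(UNIV::st set) = UNIV \<times> (UNIV \<times> UNIV)" by simp
  then have "(\<Sum>u\<in>(UNIV::st set). f u) = (\<Sum>a\<in>UNIV. \<Sum>p\<in>UNIV \<times> UNIV. f (a,p))"
    by (simp add: sum.cartesian_product)
  also have "\<dots> = (\<Sum>a\<in>UNIV. \<Sum>b\<in>UNIV. \<Sum>c\<in>UNIV. f (a,b,c))"
    by (simp add: sum.cartesian_product)
  also have "\<dots> = f (False,False,False) + f (False,False,True) + f (False,True,False) + f (False,True,True) +
  f (True,False,False) + f (True,False,True) + f (True,True,False) + f (True,True,True)"
    by (simp add: UNIV_bool add.assoc)
  finally show ?thesis .
qed

definition tcnt :: "(cls \<Rightarrow> nat) \<Rightarrow> cls \<Rightarrow> nat" where
  "tcnt f c = (case c of CD \<Rightarrow> 8 * f CD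
     | CS \<Rightarrow> 4 * f CD + f CF4 + f CS + 2 * f CT2
     | CT2 \<Rightarrow> 4 * f CT2 + 4 * f CF6
     | CF4 \<Rightarrow> 4 * f CF4 + 4 * f CT3
     | CT3 \<Rightarrow> 4 * f CF6 + 2 * f CF7 + 2 * f CT3
     | CF6 \<Rightarrow> 4 * f CF6 + 2 * f CF7 + 2 * f CT3
     | CF7 \<Rightarrow> 2 * f CF6 + 5 * f CF7 + f CT3)"

lemma step_sum: "(\<Sum>u\<in>UNIV. f (acls (astep u a))) = tcnt f (acls a)"
proof (cases a)
  case Dd then show ?thesis by (simp only: sum_st) (simp add: tcnt_def)
next
  case (Sg s)
  obtain s1 s2 s3 where s: "s = (s1,s2,s3)" by (cases s)
  show ?thesis unfolding Sg s
    by (cases s1; cases s2; cases s3; simp add: sum_st tcnt_def)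
next
  case (Pq q)
  obtain q1 q2 q3 where q: "q = (q1,q2,q3)" by (cases q)
  show ?thesis unfolding Pq q
    by (cases q1; cases q2; cases q3; simp add: sum_st tcnt_def)
qed

lemma G_Suc: "G (Suc j) w c = tcnt (G j w) c"
  by (simp add: tcnt_def)

definition lists_n :: "nat \<Rightarrow> st list set" where "lists_n j = {xs. length xs = j}"

lemma finite_lists_n[simp]: "finite (lists_n j)"
  using finite_lists_length_eq[of "UNIV::st set" j] unfolding lists_n_def by simp

lemma lists_n_Suc: "lists_n (Suc j) = (\<lambda>(u,xs). u#xs) ` (UNIV \<times> lists_n j)"
  unfolding lists_n_def by (auto simp: length_Suc_conv)

lemma sum_lists_Suc: "(\<Sum>xs\<in>lists_n (Suc j). f xs) = (\<Sum>u\<in>UNIV. \<Sum>xs\<in>lists_n j. f (u#xs))"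
proof -
  have inj: "inj_on (\<lambda>(u,xs). u#xs) (UNIV \<times> lists_n j)" by (auto simp: inj_on_def)
  have "(\<Sum>xs\<in>lists_n (Suc j). f xs) = (\<Sum>p\<in>UNIV \<times> lists_n j. f ((\<lambda>(u,xs). u#xs) p))"
    unfolding lists_n_Suc by (rule sum.reindex[OF inj, unfolded comp_def])
  also have "\<dots> = (\<Sum>u\<in>UNIV. \<Sum>xs\<in>lists_n j. f (u#xs))"
    by (simp add: sum.cartesian_product split_def)
  finally show ?thesis .
qed

lemma lists_n_0: "lists_n 0 = {[]}" unfolding lists_n_def by auto

lemma AW: "(\<Sum>xs\<in>lists_n j. w (acls (afold xs a))) = G j w (acls a)"
proof (induction j arbitrary: a)
  case 0 then show ?case by (simp add: lists_n_0)
next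
  case (Suc j)
  have "(\<Sum>xs\<in>lists_n (Suc j). w (acls (afold xs a))) = (\<Sum>u\<in>UNIV. G j w (acls (astep u a)))"
    by (simp add: sum_lists_Suc Suc.IH)
  also have "\<dots> = tcnt (G j w) (acls a)" by (rule step_sum)
  finally show ?case by (simp only: G_Suc)
qed

fun Ad :: "nat \<Rightarrow> nat" where "Ad 0 = 0" | "Ad (Suc j) = 4 * 8^j + Ad j"

lemma Ad_real: "7 * real (Ad j) = 4 * (8^j - 1)"
  by (induction j) (auto simp: algebra_simps)

lemma G_const:
  assumes "\<And>c. c \<noteq> CD \<Longrightarrow> c \<noteq> CS \<Longrightarrow> w c = p"
  shows "(\<forall>c. c \<noteq> CD \<longrightarrow> c \<noteq> CS \<longrightarrow> G j w c = 8^j * p) \<and> G j w CD = 8^j * w CD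
     \<and> 4 * G j w CS = 4 * w CS + (4 * w CD + 3 * p) * Ad j"
proof (induction j)
  case 0 then show ?case using assms by simp
next
  case (Suc j)
  then have pl: "\<And>c. c \<noteq> CD \<Longrightarrow> c \<noteq> CS \<Longrightarrow> G j w c = 8^j * p"
    and cd: "G j w CD = 8^j * w CD" and cs: "4 * G j w CS = 4 * w CS + (4 * w CD + 3 * p) * Ad j" by auto
  have "\<forall>c. c \<noteq> CD \<longrightarrow> c \<noteq> CS \<longrightarrow> G (Suc j) w c = 8^Suc j * p"
  proof (intro allI impI)
    fix c :: cls assume "c \<noteq> CD" "c \<noteq> CS"
    then show "G (Suc j) w c = 8^Suc j * p" by (cases c) (simp_all add: pl)
  qed
  moreover have "G (Suc j) w CD = 8^Suc j * w CD" by (simp add: cd)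
  moreover have "4 * G (Suc j) w CS = 4 * w CS + (4 * w CD + 3 * p) * Ad (Suc j)"
    using cs by (simp add: pl cd algebra_simps)
  ultimately show ?case by blast
qed

lemma G_add: "G j (\<lambda>c. w1 c + w2 c) c = G j w1 c + G j w2 c"
  by (induction j arbitrary: c) (auto split: cls.split)

lemma G_mult: "G j (\<lambda>c. a * w c) c = a * G j w c"
  by (induction j arbitrary: c) (auto split: cls.split simp: algebra_simps)

definition kw :: "cls \<Rightarrow> nat" where "kw c = (case c of CT2 \<Rightarrow> 2 | CT3 \<Rightarrow> 1 | _ \<Rightarrow> 0)"

lemma G_CD: "G j w CD = 8^j * w CD"
  by (induction j) auto

lemma G_kw_CD: "G j kw CD = 0"
  by (simp add: G_CD kw_def)

lemma G_kw: "15 * G (Suc j) kw CT3 = 3*8^(Suc j) + 2*3^(Suc j) \<and> 15 * G (Suc j) kw CF6 = 3*8^(Suc j) + 2*3^(Suc j)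
  \<and> 5 * G (Suc j) kw CF7 + 3^(Suc j) = 8^(Suc j) \<and> 15 * G (Suc j) kw CF4 + 8*3^(Suc j) = 3*8^(Suc j) + 15*4^(Suc j)
  \<and> 15 * G (Suc j) kw CT2 + 8 * 3^(Suc j) = 3 * 8^(Suc j) + 30 * 4^(Suc j)"
proof (induction j)
  case 0 then show ?case by (simp add: kw_def)
next
  case (Suc j)
  define P where "P = (8::nat)^Suc j"
  define F where "F = (4::nat)^Suc j"
  define T where "T = (3::nat)^Suc j"
  have e: "8^Suc (Suc j) = 8 * P" "4^Suc (Suc j) = 4 * F" "3^Suc (Suc j) = 3 * T"
    unfolding P_def F_def T_def by simp_all
  have i: "15 * G (Suc j) kw CT3 = 3*P + 2*T" "15 * G (Suc j) kw CF6 = 3*P + 2*T"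
    "5 * G (Suc j) kw CF7 + T = P" "15 * G (Suc j) kw CF4 + 8*T = 3*P + 15*F"
    "15 * G (Suc j) kw CT2 + 8 * T = 3 * P + 30 * F"
    using Suc unfolding P_def F_def T_def by auto
  have s: "G (Suc (Suc j)) kw CT3 = 4 * G (Suc j) kw CF6 + 2 * G (Suc j) kw CF7 + 2 * G (Suc j) kw CT3"
    "G (Suc (Suc j)) kw CF6 = 4 * G (Suc j) kw CF6 + 2 * G (Suc j) kw CF7 + 2 * G (Suc j) kw CT3"
    "G (Suc (Suc j)) kw CF7 = 2 * G (Suc j) kw CF6 + 5 * G (Suc j) kw CF7 + G (Suc j) kw CT3"
    "G (Suc (Suc j)) kw CF4 = 4 * G (Suc j) kw CF4 + 4 * G (Suc j) kw CT3"
    "G (Suc (Suc j)) kw CT2 = 4 * G (Suc j) kw CT2 + 4 * G (Suc j) kw CF6"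
    by (simp_all only: G.simps cls.case)
  show ?case unfolding e s
    by (intro conjI) (use i in \<open>simp add: algebra_simps; linarith\<close>)+
qed

lemma G_kw_CS: "105 * G j kw CS + 84 * 3^j + 100 = 9 * 8^j + 175 * 4^j"
proof (induction j)
  case 0 then show ?case by (simp add: kw_def)
next
  case (Suc j)
  have s: "G (Suc j) kw CS = 4 * G j kw CD + G j kw CF4 + G j kw CS + 2 * G j kw CT2"
    by (simp only: G.simps cls.case)
  show ?case
  proof (cases j)
    case 0 then show ?thesis by (simp add: kw_def)
  next
    case (Suc i)
    define P where "P = (8::nat)^Suc i"
    define F where "F = (4::nat)^Suc i"
    define T where "T = (3::nat)^Suc i"
    have e: "8^Suc j = 8 * P" "4^Suc j = 4 * F" "3^Suc j = 3 * T" "8^j = P" "4^j = F" "3^j = T"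
      unfolding P_def F_def T_def Suc by simp_all
    have i: "15 * G j kw CF4 + 8*T = 3*P + 15*F" "15 * G j kw CT2 + 8 * T = 3 * P + 30 * F"
      using G_kw[of i] unfolding P_def F_def T_def Suc by auto
    show ?thesis using Suc.IH i unfolding s e G_kw_CD by (simp add: algebra_simps; linarith)
  qed
qed

definition R0 :: "st set \<Rightarrow> st set" where
  "R0 S = {t. \<exists>c1 c2 c3. t = (c1,c2,False) \<and> (c1,c2,c3) \<in> S}"

definition poss :: "st list \<Rightarrow> st list \<Rightarrow> bool" where
  "poss tL tH \<longleftrightarrow> (\<exists>c0 c1 c2 c3 d1 d2. (c1,c2,c3) \<in> reach tL {(False,False,c0)}
      \<and> (d1,d2,c0) \<in> reach tH {(c1,c2,False)})"

definition okH :: "ast \<Rightarrow> bool \<Rightarrow> st list \<Rightarrow> bool" where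
  "okH a c0 tH \<longleftrightarrow> (\<exists>d1 d2. (d1,d2,c0) \<in> reach tH (R0 (conc a)))"

lemma poss_cons: "poss (t0#ts) tH \<longleftrightarrow> okH (afold ts (astep t0 (Sg (False,False,par t0)))) (par t0) tH"
  (is "?L \<longleftrightarrow> okH ?a _ _")
proof
  assume "?L"
  then obtain c0 c1 c2 c3 d1 d2 where A: "(c1,c2,c3) \<in> reach (t0#ts) {(False,False,c0)}"
    and B: "(d1,d2,c0) \<in> reach tH {(c1,c2,False)}" unfolding poss_def by blast
  have e: "reach (t0#ts) {(False,False,c0)} = conc (afold ts (astep t0 (Sg (False,False,c0))))"
    using reach_conc[of "t0#ts" "Sg (False,False,c0)"] by simp
  have c0: "c0 = par t0"
  proof (rule ccontr)
    assume "c0 \<noteq> par t0"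
    then have "astep t0 (Sg (False,False,c0)) = Dd" by simp
    then show False using A e by simp
  qed
  have "(c1,c2,False) \<in> R0 (conc ?a)" using A e c0 unfolding R0_def by blast
  then have "reach tH {(c1,c2,False)} \<subseteq> reach tH (R0 (conc ?a))" by (intro reach_mono) auto
  then show "okH ?a (par t0) tH" using B c0 unfolding okH_def by blast
next
  assume "okH ?a (par t0) tH"
  then obtain d1 d2 where "(d1,d2,par t0) \<in> reach tH (R0 (conc ?a))" unfolding okH_def by blast
  then obtain s where s: "s \<in> R0 (conc ?a)" "(d1,d2,par t0) \<in> reach tH {s}"
    using reach_UN[of tH "R0 (conc ?a)"] by blast
  then obtain c1 c2 c3 where "s = (c1,c2,False)" "(c1,c2,c3) \<in> conc ?a" unfolding R0_def by blast
  moreover have "conc ?a = reach (t0#ts) {(False,False,par t0)}"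
    using reach_conc[of "t0#ts" "Sg (False,False,par t0)"] by simp
  ultimately show "?L" using s unfolding poss_def by blast
qed

definition good :: "ast \<Rightarrow> bool" where
  "good a \<longleftrightarrow> a = Dd \<or> (\<exists>c. a = Sg (False,False,c)) \<or> (\<exists>q. a = Pq q)"

lemma afold_Pq: "\<exists>q'. afold xs (Pq q) = Pq q'"
  by (induction xs arbitrary: q) auto

lemma good_afold: "good (afold xs (Sg (False,False,c)))"
proof (induction xs)
  case Nil then show ?case by (auto simp: good_def)
next
  case (Cons u xs)
  show ?case
  proof (cases "par (False,False,c) \<noteq> par u")
    case True then show ?thesis by (simp add: good_def)
  next
    case False
    show ?thesis
    proof (cases "(False,False,c) = u")
      case True then show ?thesis using Cons False by simp
    next
      case nu: False
      then show ?thesis using False afold_Pq[of xs] by (auto simp: good_def)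
    qed
  qed
qed

lemma good_a: "good (afold ts (astep t0 (Sg (False,False,c))))"
  using good_afold[of "t0#ts" c] by simp

lemma conc_empty: "conc a = {} \<longleftrightarrow> acls a = CD"
proof (cases a)
  case (Pq q)
  obtain q1 q2 q3 where q: "q = (q1,q2,q3)" by (cases q)
  show ?thesis unfolding Pq q by (cases q1; cases q2; cases q3; auto)
qed auto

lemma mem_R0_Uo: "(x,y,z) \<in> R0 (Uo (q1,q2,q3)) \<longleftrightarrow> \<not> z \<and> (q1 = Some x \<or> q2 = Some y \<or> q3 \<noteq> None)"
  unfolding R0_def by auto

lemma R0_Sg: "R0 {(False,False,c)} = {(False,False,False)}" unfolding R0_def by auto

lemma R0_empty: "R0 {} = {}" unfolding R0_def by auto

lemma R0_c3: "s \<in> R0 S \<Longrightarrow> \<not> snd (snd s)" unfolding R0_def by auto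

lemma card_UNIV_st: "card (UNIV::st set) = 8"
  by (simp only: card_eq_sum sum_st)

lemma card_lists_n: "card (lists_n j) = 8^j"
  using card_lists_length_eq[of "UNIV::st set" j] unfolding lists_n_def by (simp add: card_UNIV_st)

lemma sum_lists_1: "(\<Sum>xs\<in>lists_n (Suc 0). f xs) = (\<Sum>u\<in>UNIV. f [u])"
  by (simp add: sum_lists_Suc lists_n_0)

lemma dead_count: "(\<Sum>xs\<in>lists_n j. of_bool (reach xs {s} = {}) :: nat) = Ad j"
proof -
  have "(\<Sum>xs\<in>lists_n j. of_bool (reach xs {s} = {}) :: nat)
      = (\<Sum>xs\<in>lists_n j. (\<lambda>c. of_bool (c = CD)) (acls (afold xs (Sg s))))"
    using reach_conc[of _ "Sg s"] conc_empty by (intro sum.cong) auto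
  also have "\<dots> = G j (\<lambda>c. of_bool (c = CD)) CS"
    using AW[where j=j and w="\<lambda>c. of_bool (c = CD)" and a="Sg s"] by (simp only: acls.simps)
  also have "\<dots> = Ad j"
    using G_const[of "\<lambda>c. of_bool (c = CD)" 0 j] by simp
  finally show ?thesis .
qed

lemma gz_count: "(\<Sum>xs\<in>lists_n j. of_bool (gz xs) :: nat) = 4^j"
proof (induction j)
  case 0 then show ?case by (simp add: lists_n_0 gz_def)
next
  case (Suc j)
  have pu: "\<And>u. (\<Sum>xs\<in>lists_n j. of_bool (gz (u#xs)) :: nat) = of_bool (\<not> snd (snd u)) * 4^j"
    using Suc.IH by (case_tac "snd (snd u)") (simp_all add: gz_def)
  have "(\<Sum>xs\<in>lists_n (Suc j). of_bool (gz xs) :: nat) = (\<Sum>u\<in>UNIV. \<Sum>xs\<in>lists_n j. of_bool (gz (u#xs)) :: nat)"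
    by (rule sum_lists_Suc)
  also have "\<dots> = (\<Sum>u\<in>(UNIV::st set). of_bool (\<not> snd (snd u)) * 4^j)" by (simp only: pu)
  also have "\<dots> = 4 * 4^j" by (simp only: sum_st) simp
  finally show ?case by simp
qed

lemma one_s: "(\<exists>d1 d2. (d1,d2,c0) \<in> dl (a,b,g) {(s1,s2,False)}) \<longleftrightarrow> par (s1,s2,False) = par (a,b,g) \<and> (g \<or> \<not>c0)"
  by (cases a; cases b; cases g; cases s1; cases s2; cases c0) (auto simp: dl_single)

lemma one_step:
  assumes "\<forall>s\<in>R. \<not> snd (snd s)"
  shows "(\<exists>d1 d2. (d1,d2,c0) \<in> dl u R) \<longleftrightarrow> (\<exists>s\<in>R. par s = par u) \<and> (snd (snd u) \<or> \<not>c0)"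
proof -
  obtain a b g where u: "u = (a,b,g)" by (cases u)
  have dU: "dl u R = (\<Union>s\<in>R. dl u {s})" unfolding dl_def by auto
  have each: "(\<exists>d1 d2. (d1,d2,c0) \<in> dl u {s}) \<longleftrightarrow> par s = par u \<and> (g \<or> \<not>c0)" if "s \<in> R" for s
  proof -
    obtain s1 s2 s3 where s: "s = (s1,s2,s3)" by (cases s)
    have "\<not> s3" using assms that s by auto
    then show ?thesis using one_s[of c0 a b g s1 s2] unfolding s u by simp
  qed
  have "(\<exists>d1 d2. (d1,d2,c0) \<in> dl u R) \<longleftrightarrow> (\<exists>s\<in>R. \<exists>d1 d2. (d1,d2,c0) \<in> dl u {s})"
    unfolding dU by blast
  also have "\<dots> \<longleftrightarrow> (\<exists>s\<in>R. par s = par u \<and> (g \<or> \<not>c0))"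
    by (rule bex_cong[OF refl]) (rule each)
  finally show ?thesis using u by auto
qed

lemma qcls_not_CS[simp]: "qcls q \<noteq> CS"
proof -
  obtain q1 q2 q3 where q: "q = (q1,q2,q3)" by (cases q)
  show ?thesis unfolding q by simp
qed

definition h4 :: "bool \<Rightarrow> cls \<Rightarrow> nat" where
  "h4 c0 c = (case c of CD \<Rightarrow> 8 | CS \<Rightarrow> (if c0 then 6 else 4) | _ \<Rightarrow> (if c0 then 4 else 0))"

lemma ex_par_R0_Uo: "(\<exists>s\<in>R0 (Uo q). par s = p) \<longleftrightarrow> qcls q \<noteq> CD"
proof -
  obtain q1 q2 q3 where q: "q = (q1,q2,q3)" by (cases q)
  show ?thesis unfolding q Bex_def split_paired_Ex mem_R0_Uo
    by (cases q1; cases q2; cases q3; cases p; simp add: ex_bool_eq)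
qed

lemma okH_one: "okH a c0 [u] \<longleftrightarrow> (\<exists>s\<in>R0 (conc a). par s = par u) \<and> (snd (snd u) \<or> \<not>c0)"
  unfolding okH_def using one_step[of "R0 (conc a)" c0 u] R0_c3 by auto

lemma inner4:
  assumes "good a"
  shows "(\<Sum>u\<in>UNIV. of_bool (\<not> okH a c0 [u]) :: nat) = h4 c0 (acls a)"
proof -
  consider "a = Dd" | c where "a = Sg (False,False,c)" | q where "a = Pq q"
    using assms unfolding good_def by blast
  then show ?thesis
  proof cases
    case 1 then show ?thesis by (simp only: okH_one sum_st) (simp add: R0_empty h4_def)
  next
    case (2 c) then show ?thesis by (simp only: okH_one sum_st) (cases c0; simp add: R0_Sg h4_def)
  next
    case (3 q)
    have e1: "(\<exists>s\<in>R0 (Uo q). par s) \<longleftrightarrow> qcls q \<noteq> CD" using ex_par_R0_Uo[of q True] by simp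
    have e2: "(\<exists>s\<in>R0 (Uo q). \<not> par s) \<longleftrightarrow> qcls q \<noteq> CD" using ex_par_R0_Uo[of q False] by simp
    show ?thesis using 3
      by (simp only: okH_one sum_st) (cases "qcls q"; cases c0; simp add: h4_def e1 e2)
  qed
qed

definition w3 :: "nat \<Rightarrow> cls \<Rightarrow> nat" where "w3 r c = (case c of CD \<Rightarrow> 8^r | CS \<Rightarrow> Ad r | _ \<Rightarrow> 0)"

lemma sum_bool_le_card: "(\<Sum>x\<in>A. of_bool (P x) :: nat) \<le> card A"
proof (cases "finite A")
  case True
  have "(\<Sum>x\<in>A. of_bool (P x) :: nat) \<le> (\<Sum>x\<in>A. 1)" by (rule sum_mono) simp
  then show ?thesis by simp
qed simp

lemma inner3:
  assumes "good a"
  shows "w3 r (acls a) \<le> (\<Sum>tH\<in>lists_n r. of_bool (\<not> okH a c0 tH) :: nat)"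
proof (cases "acls a = CD")
  case True
  then have "conc a = {}" using conc_empty by simp
  then have "\<And>tH. \<not> okH a c0 tH" unfolding okH_def by (simp add: R0_empty)
  then show ?thesis using True by (simp add: w3_def card_lists_n)
next
  case nD: False
  show ?thesis
  proof (cases "\<exists>c. a = Sg (False,False,c)")
    case True
    then obtain c where a: "a = Sg (False,False,c)" by blast
    have "(\<Sum>tH\<in>lists_n r. of_bool (reach tH {(False,False,False)} = {}) :: nat)
       \<le> (\<Sum>tH\<in>lists_n r. of_bool (\<not> okH a c0 tH))"
      by (rule sum_mono) (auto simp: okH_def a R0_Sg)
    then show ?thesis using a by (simp add: w3_def dead_count)
  next
    case False
    then obtain q where "a = Pq q" using assms nD unfolding good_def by (cases a) auto
    then show ?thesis using nD by (cases "qcls q") (simp_all add: w3_def)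
  qed
qed

definition wU :: "nat \<Rightarrow> cls \<Rightarrow> nat" where
  "wU r c = (case c of CD \<Rightarrow> 8^r | CS \<Rightarrow> Ad r | CT2 \<Rightarrow> 2 * Ad (r - 1) | CT3 \<Rightarrow> Ad (r - 1) | _ \<Rightarrow> 0)"

lemma sum_card_st: "(\<Sum>u\<in>(UNIV::st set). of_bool (P u) :: nat) = card {u. P u}"
proof -
  have "(\<Sum>u\<in>(UNIV::st set). of_bool (P u) :: nat) = (\<Sum>u\<in>{u. P u}. 1)"
    by (rule sum.mono_neutral_cong_right) auto
  then show ?thesis by simp
qed

lemma t3_set: "{u. \<forall>s\<in>R0 (Uo q). par s \<noteq> par u} = (if qcls q = CD then UNIV else {})"
proof -
  obtain q1 q2 q3 where q: "q = (q1,q2,q3)" by (cases q)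
  have "\<exists>s\<in>R0 (Uo q). par s = par u" if "qcls q \<noteq> CD" for u
    using ex_par_R0_Uo[of q "par u"] that by simp
  moreover have "R0 (Uo q) = {}" if "qcls q = CD"
    using that conc_empty[of "Pq q"] by (simp add: R0_empty)
  ultimately show ?thesis by auto
qed

lemma t3_q: "(\<Sum>u\<in>UNIV. of_bool (\<forall>s\<in>R0 (Uo q). par s \<noteq> par u) :: nat) = (if qcls q = CD then 8 else 0)"
  unfolding sum_card_st t3_set by (simp add: card_UNIV_st)

lemma t4_set: "{u. u \<in> R0 (Uo (q1,q2,q3)) \<and> (\<forall>s\<in>R0 (Uo (q1,q2,q3)). par s = par u \<longrightarrow> s = u)} =
  (if q3 \<noteq> None then {} else (case (q1,q2) of (Some a, Some b) \<Rightarrow> {(a,b,False)}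
     | (Some a, None) \<Rightarrow> {(a,False,False),(a,True,False)}
     | (None, Some b) \<Rightarrow> {(False,b,False),(True,b,False)} | (None,None) \<Rightarrow> {}))"
  apply (rule set_eqI)
  apply (case_tac x)
  apply (cases q1; cases q2; cases q3)
  apply (simp_all add: mem_R0_Uo Ball_def split_paired_All del: Uo.simps)
  apply (auto simp: all_bool_eq)
  done

lemma t4_q: "(\<Sum>u\<in>UNIV. of_bool (u \<in> R0 (Uo q) \<and> (\<forall>s\<in>R0 (Uo q). par s = par u \<longrightarrow> s = u)) :: nat) = kw (qcls q)"
proof -
  obtain q1 q2 q3 where q: "q = (q1,q2,q3)" by (cases q)
  show ?thesis unfolding sum_card_st q t4_set
    by (cases q1; cases q2; cases q3; simp add: kw_def)
qed

definition Sn :: "nat \<Rightarrow> nat \<Rightarrow> nat" where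
  "Sn m r = (\<Sum>tL\<in>lists_n m. \<Sum>tH\<in>lists_n r. of_bool (\<not> poss tL tH))"

lemma Sn_Suc: "Sn (Suc j) r = (\<Sum>t0\<in>UNIV. \<Sum>ts\<in>lists_n j. \<Sum>tH\<in>lists_n r.
    of_bool (\<not> okH (afold ts (astep t0 (Sg (False,False,par t0)))) (par t0) tH))"
  unfolding Sn_def sum_lists_Suc poss_cons ..

lemma sum_t0: "(\<Sum>t0\<in>UNIV. (f :: bool \<Rightarrow> cls \<Rightarrow> nat) (par t0) (acls (astep t0 (Sg (False,False,par t0))))) =
   f False CS + f False CF4 + 2 * f False CT2 + f True CS + f True CF4 + 2 * f True CT2"
  by (simp only: sum_st) (simp add: algebra_simps)

lemma sum_AW_t0: "(\<Sum>t0\<in>UNIV. \<Sum>ts\<in>lists_n j. (f :: bool \<Rightarrow> cls \<Rightarrow> nat) (par t0) (acls (afold ts (astep t0 (Sg (False,False,par t0))))))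
   = f' False CS + f' False CF4 + 2 * f' False CT2 + f' True CS + f' True CF4 + 2 * f' True CT2"
  if "f' = (\<lambda>c0 c. G j (f c0) c)"
proof -
  have "(\<Sum>t0\<in>UNIV. \<Sum>ts\<in>lists_n j. f (par t0) (acls (afold ts (astep t0 (Sg (False,False,par t0))))))
     = (\<Sum>t0\<in>UNIV. f' (par t0) (acls (astep t0 (Sg (False,False,par t0)))))"
    unfolding that by (intro sum.cong refl AW)
  also have "\<dots> = f' False CS + f' False CF4 + 2 * f' False CT2 + f' True CS + f' True CF4 + 2 * f' True CT2"
    by (rule sum_t0)
  finally show ?thesis .
qed

lemma S4: "real (Sn (Suc j) 1) = 160/7 * 8^j - 6/7"
proof -
  have "Sn (Suc j) 1 = (\<Sum>t0\<in>UNIV. \<Sum>ts\<in>lists_n j. h4 (par t0) (acls (afold ts (astep t0 (Sg (False,False,par t0))))))"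
    unfolding Sn_Suc One_nat_def sum_lists_1
    by (intro sum.cong refl inner4 good_a)
  also have "\<dots> = G j (h4 False) CS + G j (h4 False) CF4 + 2 * G j (h4 False) CT2
      + G j (h4 True) CS + G j (h4 True) CF4 + 2 * G j (h4 True) CT2"
    by (rule sum_AW_t0) (rule refl)
  finally have e: "Sn (Suc j) 1 = G j (h4 False) CS + G j (h4 False) CF4 + 2 * G j (h4 False) CT2
      + G j (h4 True) CS + G j (h4 True) CF4 + 2 * G j (h4 True) CT2" .
  have gF: "(\<forall>c. c \<noteq> CD \<longrightarrow> c \<noteq> CS \<longrightarrow> G j (h4 False) c = 8^j * 0) \<and> G j (h4 False) CD = 8^j * 8
     \<and> 4 * G j (h4 False) CS = 4 * 4 + (4 * 8 + 3 * 0) * Ad j"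
    using G_const[of "h4 False" 0 j] by (simp add: h4_def split: cls.split)
  have gT: "(\<forall>c. c \<noteq> CD \<longrightarrow> c \<noteq> CS \<longrightarrow> G j (h4 True) c = 8^j * 4) \<and> G j (h4 True) CD = 8^j * 8
     \<and> 4 * G j (h4 True) CS = 4 * 6 + (4 * 8 + 3 * 4) * Ad j"
    using G_const[of "h4 True" 4 j] by (simp add: h4_def split: cls.split)
  have "4 * Sn (Suc j) 1 = 40 + 76 * Ad j + 48 * 8^j" using e gF gT by simp
  then have "real (4 * Sn (Suc j) 1) = real (40 + 76 * Ad j + 48 * 8^j)" by (rule arg_cong)
  then have "4 * real (Sn (Suc j) 1) = 40 + 76 * real (Ad j) + 48 * 8^j"
    by (simp only: of_nat_add of_nat_mult of_nat_numeral of_nat_power)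
  then show ?thesis using Ad_real[of j] by (simp add: algebra_simps)
qed

lemma S3: "2 * Ad r + 2 * 8^r * Ad j \<le> Sn (Suc j) r"
proof -
  have "(\<Sum>t0\<in>UNIV. \<Sum>ts\<in>lists_n j. w3 r (acls (afold ts (astep t0 (Sg (False,False,par t0)))))) \<le> Sn (Suc j) r"
    unfolding Sn_Suc by (intro sum_mono inner3 good_a)
  moreover have "(\<Sum>t0\<in>UNIV. \<Sum>ts\<in>lists_n j. (\<lambda>c0. w3 r) (par t0) (acls (afold ts (astep t0 (Sg (False,False,par t0))))))
     = G j (w3 r) CS + G j (w3 r) CF4 + 2 * G j (w3 r) CT2 + G j (w3 r) CS + G j (w3 r) CF4 + 2 * G j (w3 r) CT2"
    by (rule sum_AW_t0) (rule refl)
  moreover have "(\<forall>c. c \<noteq> CD \<longrightarrow> c \<noteq> CS \<longrightarrow> G j (w3 r) c = 8^j * 0) \<and> G j (w3 r) CD = 8^j * 8^r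
     \<and> 4 * G j (w3 r) CS = 4 * Ad r + (4 * 8^r + 3 * 0) * Ad j"
    using G_const[of "w3 r" 0 j] by (simp add: w3_def split: cls.split)
  ultimately show ?thesis by simp
qed

lemma inner_upper:
  assumes "good a"
  shows "(\<Sum>tH\<in>lists_n (Suc r). of_bool (\<not> okH a c0 tH) :: nat) \<le> wU (Suc r) (acls a) + of_bool c0 * 4^(Suc r)"
proof (cases "acls a = CD")
  case True
  have "(\<Sum>tH\<in>lists_n (Suc r). of_bool (\<not> okH a c0 tH) :: nat) \<le> card (lists_n (Suc r))"
    by (rule sum_bool_le_card)
  then show ?thesis using True by (simp add: wU_def card_lists_n)
next
  case nD: False
  define R where "R = R0 (conc a)"
  have Rc3: "\<forall>s\<in>R. \<not> snd (snd s)" using R0_c3 unfolding R_def by blast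
  have "conc a \<noteq> {}" using nD conc_empty by simp
  then obtain c1 c2 c3 where "(c1,c2,c3) \<in> conc a" by auto
  then have Rne: "R \<noteq> {}" unfolding R_def R0_def by blast
  define T3 where "T3 u = (\<forall>s\<in>R. par s \<noteq> par u)" for u
  define T4 where "T4 u = (u \<in> R \<and> (\<forall>s\<in>R. par s = par u \<longrightarrow> s = u))" for u
  have pw: "of_bool (\<not> okH a c0 (u#rest)) \<le> of_bool (c0 \<and> gz (u#rest)) + (of_bool (T3 u) + of_bool (T4 u \<and> reach rest {u} = {}) :: nat)" for u rest
  proof (cases "okH a c0 (u#rest)")
    case False
    then have "\<forall>d1 d2. (d1,d2,c0) \<notin> reach (u#rest) R" unfolding okH_def R_def by blast
    from Hmain[OF Rc3 this] Rne
    have "(c0 \<and> gz (u#rest)) \<or> T3 u \<or> (T4 u \<and> reach rest {u} = {})"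
      unfolding T3_def T4_def by blast
    then show ?thesis using False by (elim disjE) simp_all
  qed simp
  have "(\<Sum>tH\<in>lists_n (Suc r). of_bool (\<not> okH a c0 tH) :: nat) = (\<Sum>u\<in>UNIV. \<Sum>rest\<in>lists_n r. of_bool (\<not> okH a c0 (u#rest)))"
    by (rule sum_lists_Suc)
  also have "\<dots> \<le> (\<Sum>u\<in>UNIV. \<Sum>rest\<in>lists_n r. of_bool (c0 \<and> gz (u#rest)) + (of_bool (T3 u) + of_bool (T4 u \<and> reach rest {u} = {}) :: nat))"
    by (intro sum_mono pw)
  also have "\<dots> = (\<Sum>u\<in>UNIV. \<Sum>rest\<in>lists_n r. of_bool (c0 \<and> gz (u#rest)) :: nat)
       + (\<Sum>u\<in>UNIV. of_bool (T3 u) * 8^r + of_bool (T4 u) * Ad r)"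
  proof -
    have "\<And>u. (\<Sum>rest\<in>lists_n r. of_bool (T3 u) + of_bool (T4 u \<and> reach rest {u} = {}) :: nat)
       = of_bool (T3 u) * 8^r + of_bool (T4 u) * Ad r"
    proof -
      fix u
      have "(\<Sum>rest\<in>lists_n r. of_bool (T4 u \<and> reach rest {u} = {}) :: nat) = of_bool (T4 u) * Ad r"
        by (cases "T4 u") (simp_all add: dead_count[where j=r and s=u, symmetric])
      then show "?thesis u" by (simp add: sum.distrib card_lists_n)
    qed
    then show ?thesis by (simp add: sum.distrib)
  qed
  also have "(\<Sum>u\<in>UNIV. \<Sum>rest\<in>lists_n r. of_bool (c0 \<and> gz (u#rest)) :: nat) = of_bool c0 * 4^(Suc r)"
  proof -
    have "(\<Sum>u\<in>UNIV. \<Sum>rest\<in>lists_n r. of_bool (c0 \<and> gz (u#rest)) :: nat)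
        = (\<Sum>tH\<in>lists_n (Suc r). of_bool (c0 \<and> gz tH))" by (rule sum_lists_Suc[symmetric])
    also have "\<dots> = of_bool c0 * 4^(Suc r)" using gz_count[of "Suc r"] by (cases c0) simp_all
    finally show ?thesis .
  qed
  also have "(\<Sum>u\<in>UNIV. of_bool (T3 u) * 8^r + of_bool (T4 u) * Ad r) = wU (Suc r) (acls a)"
  proof -
    consider c where "a = Sg (False,False,c)" | q where "a = Pq q"
      using assms nD unfolding good_def by (cases a) auto
    then show ?thesis
    proof cases
      case (1 c)
      then have "R = {(False,False,False)}" unfolding R_def by (simp add: R0_Sg)
      then show ?thesis unfolding T3_def T4_def 1 by (simp only: sum_st) (simp add: wU_def)
    next
      case (2 q)
      have "(\<Sum>u\<in>UNIV. of_bool (T3 u) * 8^r + of_bool (T4 u) * Ad r)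
         = (\<Sum>u\<in>UNIV. of_bool (T3 u)) * 8^r + (\<Sum>u\<in>UNIV. of_bool (T4 u)) * Ad r"
        by (simp add: sum.distrib sum_distrib_right)
      also have "\<dots> = kw (qcls q) * Ad r"
        using t3_q[of q] t4_q[of q] nD 2 unfolding T3_def T4_def R_def by simp
      also have "\<dots> = wU (Suc r) (acls a)" using 2 nD by (cases "qcls q") (simp_all add: kw_def wU_def)
      finally show ?thesis .
    qed
  qed
  finally show ?thesis by simp
qed

lemma wU_decomp: "wU (Suc r) = (\<lambda>c. 8^Suc r * of_bool (c = CD) + (Ad (Suc r) * of_bool (c = CS) + Ad r * kw c))"
  by (rule ext, case_tac c) (simp_all add: wU_def kw_def)

lemma G_wU: "G j (wU (Suc r)) c = 8^Suc r * G j (\<lambda>c. of_bool (c = CD)) c + (Ad (Suc r) * G j (\<lambda>c. of_bool (c = CS)) c + Ad r * G j kw c)"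
  unfolding wU_decomp G_add G_mult ..

lemma SU: "Sn (Suc j) (Suc r) \<le> 2 * (8^Suc r * Ad j + Ad (Suc r) + Ad r * (G j kw CS + G j kw CF4 + 2 * G j kw CT2)) + 4 * 8^j * 4^(Suc r)"
proof -
  have "Sn (Suc j) (Suc r) \<le> (\<Sum>t0\<in>UNIV. \<Sum>ts\<in>lists_n j. wU (Suc r) (acls (afold ts (astep t0 (Sg (False,False,par t0)))))
      + of_bool (par t0) * 4^(Suc r))"
    unfolding Sn_Suc by (intro sum_mono inner_upper good_a)
  also have "\<dots> = (\<Sum>t0\<in>UNIV. \<Sum>ts\<in>lists_n j. (\<lambda>c0. wU (Suc r)) (par t0) (acls (afold ts (astep t0 (Sg (False,False,par t0))))))
      + (\<Sum>t0\<in>UNIV. of_bool (par t0) * 4^(Suc r) * 8^j)"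
    by (simp add: sum.distrib card_lists_n mult_ac)
  also have "(\<Sum>t0\<in>UNIV. of_bool (par t0) * 4^(Suc r) * 8^j :: nat) = 4 * 8^j * 4^(Suc r)"
    by (simp only: sum_st) simp
  also have "(\<Sum>t0\<in>UNIV. \<Sum>ts\<in>lists_n j. (\<lambda>c0. wU (Suc r)) (par t0) (acls (afold ts (astep t0 (Sg (False,False,par t0))))))
     = G j (wU (Suc r)) CS + G j (wU (Suc r)) CF4 + 2 * G j (wU (Suc r)) CT2 + G j (wU (Suc r)) CS + G j (wU (Suc r)) CF4 + 2 * G j (wU (Suc r)) CT2"
    by (rule sum_AW_t0) (rule refl)
  also have "\<dots> = 2 * (8^Suc r * Ad j + Ad (Suc r) + Ad r * (G j kw CS + G j kw CF4 + 2 * G j kw CT2))"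
  proof -
    have a: "(\<forall>c. c \<noteq> CD \<longrightarrow> c \<noteq> CS \<longrightarrow> G j (\<lambda>c. of_bool (c = CD)) c = 8^j * 0) \<and> G j (\<lambda>c. of_bool (c = CD)) CD = 8^j * 1
     \<and> 4 * G j (\<lambda>c. of_bool (c = CD)) CS = 4 * 0 + (4 * 1 + 3 * 0) * Ad j"
      using G_const[of "\<lambda>c. of_bool (c = CD)" 0 j] by simp
    have b: "(\<forall>c. c \<noteq> CD \<longrightarrow> c \<noteq> CS \<longrightarrow> G j (\<lambda>c. of_bool (c = CS)) c = 8^j * 0) \<and> G j (\<lambda>c. of_bool (c = CS)) CD = 8^j * 0
     \<and> 4 * G j (\<lambda>c. of_bool (c = CS)) CS = 4 * 1 + (4 * 0 + 3 * 0) * Ad j"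
      using G_const[of "\<lambda>c. of_bool (c = CS)" 0 j] by simp
    show ?thesis unfolding G_wU using a b by (simp add: algebra_simps)
  qed
  finally show ?thesis by simp
qed

fun bitsn :: "nat \<Rightarrow> nat \<Rightarrow> bool list" where
  "bitsn 0 x = []" | "bitsn (Suc n) x = odd x # bitsn n (x div 2)"

lemma length_bitsn[simp]: "length (bitsn n x) = n"
  by (induction n arbitrary: x) auto

lemma bitsn_add_high: "bitsn n (x + 2^n * y) = bitsn n x"
proof (induction n arbitrary: x)
  case (Suc n)
  have "(x + 2 ^ Suc n * y) div 2 = x div 2 + 2^n * y" by simp
  then show ?case using Suc by simp
qed simp

lemma bitsn_mod: "bitsn n (x mod 2^n) = bitsn n x"
  using bitsn_add_high[of n "x mod 2^n" "x div 2^n"] by simp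

lemma bitsn_append: "bitsn (k + l) x = bitsn k x @ bitsn l (x div 2^k)"
proof (induction k arbitrary: x)
  case (Suc k)
  then show ?case by (simp add: div_mult2_eq)
qed simp

lemma bitsn_inj: "x < 2^n \<Longrightarrow> y < 2^n \<Longrightarrow> bitsn n x = bitsn n y \<Longrightarrow> x = y"
proof (induction n arbitrary: x y)
  case 0 then show ?case by simp
next
  case (Suc n)
  have o: "odd x = odd y" and b: "bitsn n (x div 2) = bitsn n (y div 2)" using Suc.prems(3) by auto
  have "x div 2 < 2^n" "y div 2 < 2^n" using Suc.prems(1,2) by auto
  then have d: "x div 2 = y div 2" using Suc.IH b by blast
  have "x mod 2 = y mod 2" using o by (simp add: mod2_eq_if)
  then show ?case using d by (metis div_mult_mod_eq)
qed

fun ofb :: "bool list \<Rightarrow> nat" where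
  "ofb [] = 0" | "ofb (b#bs) = of_bool b + 2 * ofb bs"

lemma ofb_less: "ofb xs < 2 ^ length xs"
proof (induction xs)
  case (Cons a xs)
  then have "ofb xs + 1 \<le> 2 ^ length xs" by simp
  then show ?case by (cases a) simp_all
qed simp

lemma bitsn_ofb: "bitsn (length xs) (ofb xs) = xs"
  by (induction xs) auto

lemma bitsn_surj: "length xs = n \<Longrightarrow> \<exists>x<2^n. bitsn n x = xs"
  using ofb_less bitsn_ofb by blast

fun addb :: "bool list \<Rightarrow> bool list \<Rightarrow> bool \<Rightarrow> bool list" where
  "addb (x#xs) (a#as) c = (x \<noteq> (a \<noteq> c)) # addb xs as (maj x a c)"
| "addb _ _ c = []"

fun cout :: "bool list \<Rightarrow> bool list \<Rightarrow> bool \<Rightarrow> bool" where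
  "cout (x#xs) (a#as) c = cout xs as (maj x a c)"
| "cout _ _ c = c"

lemma add_key: fixes x a :: nat shows "x + a + of_bool c = of_bool (odd x \<noteq> (odd a \<noteq> c)) + 2 * (x div 2 + a div 2 + of_bool (maj (odd x) (odd a) c))"
proof -
  show ?thesis
    by (cases "odd x"; cases "odd a"; cases c) (auto simp: maj_def elim!: oddE evenE)
qed

lemma bitsn_add: "bitsn n (x + a + of_bool c) = addb (bitsn n x) (bitsn n a) c"
proof (induction n arbitrary: x a c)
  case (Suc n)
  have k: "x + a + of_bool c = of_bool (odd x \<noteq> (odd a \<noteq> c)) + 2 * (x div 2 + a div 2 + of_bool (maj (odd x) (odd a) c))"
    by (rule add_key)
  have "odd (x + a + of_bool c) = (odd x \<noteq> (odd a \<noteq> c))" by (subst k) simp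
  moreover have "(x + a + of_bool c) div 2 = x div 2 + a div 2 + of_bool (maj (odd x) (odd a) c)" by (subst k) simp
  ultimately show ?case using Suc.IH by simp
qed simp

lemma bitsn_xor: "bitsn n (xor x y) = map2 (\<noteq>) (bitsn n x) (bitsn n y)"
proof (induction n arbitrary: x y)
  case (Suc n)
  have k: "xor x y = of_bool (odd x \<noteq> odd y) + 2 * xor (x div 2) (y div 2)" by (rule xor_nat_rec)
  have "odd (xor x y) = (odd x \<noteq> odd y)" by (subst k) simp
  moreover have "xor x y div 2 = xor (x div 2) (y div 2)" by (subst k) simp
  ultimately show ?case using Suc.IH by simp
qed simp

lemma xor_less: "x < 2^n \<Longrightarrow> y < 2^n \<Longrightarrow> xor x y < (2::nat)^n"
proof (induction n arbitrary: x y)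
  case 0 then show ?case by simp
next
  case (Suc n)
  have k: "xor x y = of_bool (odd x \<noteq> odd y) + 2 * xor (x div 2) (y div 2)" by (rule xor_nat_rec)
  have "xor (x div 2) (y div 2) < 2^n" using Suc by auto
  then show ?case by (subst k) auto
qed

lemma rotl_split: assumes "v < 2^n" "r \<le> n"
  shows "rotl n r v = v div 2^(n-r) + 2^r * (v mod 2^(n-r))"
proof -
  define m where "m = n - r"
  have nm: "n = m + r" using assms unfolding m_def by simp
  have v: "v = v mod 2^m + 2^m * (v div 2^m)" by simp
  have "v * 2^r = (v mod 2^m + 2^m * (v div 2^m)) * 2^r" by (rule arg_cong[where f="\<lambda>t. t * 2^r", OF v])
  also have "\<dots> = (v mod 2^m) * 2^r + 2^n * (v div 2^m)" by (simp only: nm power_add algebra_simps)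
  finally have "v * 2^r = (v mod 2^m) * 2^r + 2^n * (v div 2^m)" .
  moreover have "(v mod 2^m) * 2^r < 2^n"
  proof -
    have "v mod 2^m < 2^m" by simp
    then have "(v mod 2^m) * 2^r < 2^m * 2^r" by simp
    then show ?thesis by (simp add: nm power_add)
  qed
  ultimately have "(v * 2^r) mod 2^n = (v mod 2^m) * 2^r" by simp
  then show ?thesis unfolding rotl_def m_def by simp
qed

lemma rotl_less: assumes "v < 2^n" "r \<le> n" shows "rotl n r v < 2^n"
proof -
  define m where "m = n - r"
  have nm: "n = m + r" using assms unfolding m_def by simp
  have "v div 2^m < 2^r" using assms(1) by (simp add: nm power_add less_mult_imp_div_less mult.commute)
  moreover have "v mod 2^m \<le> 2^m - 1" by (simp add: less_Suc_eq_le[symmetric])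
  ultimately have "v div 2^m + 2^r * (v mod 2^m) < 2^r + 2^r * (2^m - 1)" by (meson add_less_le_mono mult_le_mono2)
  also have "\<dots> = 2^n" by (simp add: nm power_add algebra_simps)
  finally show ?thesis using rotl_split[OF assms] unfolding m_def by simp
qed

lemma bitsn_rotl: assumes "v < 2^n" "r \<le> n"
  shows "bitsn n (rotl n r v) = drop (n-r) (bitsn n v) @ take (n-r) (bitsn n v)"
proof -
  define m where "m = n - r"
  have nm: "n = m + r" "n = r + m" using assms unfolding m_def by simp_all
  have vh: "v div 2^m < 2^r" using assms(1) by (simp add: nm power_add less_mult_imp_div_less mult.commute)
  have e: "rotl n r v = v div 2^m + 2^r * (v mod 2^m)" using rotl_split[OF assms] unfolding m_def by simp
  have "bitsn n (rotl n r v) = bitsn (r + m) (rotl n r v)" using nm(2) by simp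
  then have "bitsn n (rotl n r v) = bitsn (r + m) (v div 2^m + 2^r * (v mod 2^m))" using e by simp
  also have "\<dots> = bitsn r (v div 2^m) @ bitsn m (v mod 2^m)"
  proof -
    have "(v div 2^m + 2^r * (v mod 2^m)) div 2^r = v mod 2^m" using vh by simp
    then show ?thesis by (simp add: bitsn_append bitsn_add_high)
  qed
  finally have L: "bitsn n (rotl n r v) = bitsn r (v div 2^m) @ bitsn m (v mod 2^m)" .
  have R: "bitsn n v = bitsn m (v mod 2^m) @ bitsn r (v div 2^m)"
    using bitsn_append[of m r v] by (simp add: nm(1) bitsn_mod)
  show ?thesis unfolding L R m_def[symmetric] by simp
qed

lemma length_addb[simp]: "length (addb xs as c) = min (length xs) (length as)"
  by (induction xs as c rule: addb.induct) auto

lemma addb_append: "length xs = length as \<Longrightarrow> addb (xs @ ys) (as @ bs) c = addb xs as c @ addb ys bs (cout xs as c)"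
  by (induction xs as c rule: addb.induct) auto

lemma head_par: "(((x \<noteq> (a \<noteq> c1)) \<noteq> (y \<noteq> (b \<noteq> c2))) = ((x \<noteq> y) \<noteq> (g \<noteq> c3))) \<longleftrightarrow> par (c1,c2,c3) = par (a,b,g)"
  by (cases x; cases y; cases a; cases b; cases g; cases c1; cases c2; cases c3) auto

lemma run:
  assumes "length bs = length as" "length gs = length as"
  shows "t \<in> reach (zip as (zip bs gs)) {(c1,c2,c3)} \<longleftrightarrow>
    (\<exists>xs ys. length xs = length as \<and> length ys = length as \<and>
       map2 (\<noteq>) (addb xs as c1) (addb ys bs c2) = addb (map2 (\<noteq>) xs ys) gs c3 \<and>
       t = (cout xs as c1, cout ys bs c2, cout (map2 (\<noteq>) xs ys) gs c3))"
  using assms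
proof (induction as arbitrary: bs gs c1 c2 c3)
  case Nil then show ?case by simp
next
  case (Cons a as)
  obtain b bs' where bs: "bs = b # bs'" using Cons.prems by (cases bs) auto
  obtain g gs' where gs: "gs = g # gs'" using Cons.prems by (cases gs) auto
  have lb: "length bs' = length as" "length gs' = length as" using Cons.prems bs gs by auto
  let ?rest = "zip as (zip bs' gs')"
  have "t \<in> reach (zip (a#as) (zip bs gs)) {(c1,c2,c3)} \<longleftrightarrow> t \<in> reach ?rest (dl (a,b,g) {(c1,c2,c3)})"
    by (simp add: bs gs)
  also have "\<dots> \<longleftrightarrow> (\<exists>s\<in>dl (a,b,g) {(c1,c2,c3)}. t \<in> reach ?rest {s})"
    by (subst reach_UN) blast
  also have "\<dots> \<longleftrightarrow> (par (c1,c2,c3) = par (a,b,g) \<and> (\<exists>x y. t \<in> reach ?rest {tr3 (c1,c2,c3) (a,b,g) x y}))"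
    unfolding dl_def Bex_def mem_Collect_eq singleton_iff by blast
  also have "\<dots> \<longleftrightarrow> (\<exists>xs ys. length xs = length (a#as) \<and> length ys = length (a#as) \<and>
       map2 (\<noteq>) (addb xs (a#as) c1) (addb ys bs c2) = addb (map2 (\<noteq>) xs ys) gs c3 \<and>
       t = (cout xs (a#as) c1, cout ys bs c2, cout (map2 (\<noteq>) xs ys) gs c3))"
  proof
    assume "par (c1,c2,c3) = par (a,b,g) \<and> (\<exists>x y. t \<in> reach ?rest {tr3 (c1,c2,c3) (a,b,g) x y})"
    then obtain x y where p: "par (c1,c2,c3) = par (a,b,g)" and tt: "t \<in> reach ?rest {tr3 (c1,c2,c3) (a,b,g) x y}"
      by blast
    from tt have "t \<in> reach ?rest {(maj x a c1, maj y b c2, maj (x \<noteq> y) g c3)}" by simp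
    then obtain xs ys where xy: "length xs = length as" "length ys = length as"
       "map2 (\<noteq>) (addb xs as (maj x a c1)) (addb ys bs' (maj y b c2)) = addb (map2 (\<noteq>) xs ys) gs' (maj (x \<noteq> y) g c3)"
       "t = (cout xs as (maj x a c1), cout ys bs' (maj y b c2), cout (map2 (\<noteq>) xs ys) gs' (maj (x \<noteq> y) g c3))"
      using Cons.IH[OF lb] by blast
    show "\<exists>xs ys. length xs = length (a#as) \<and> length ys = length (a#as) \<and>
       map2 (\<noteq>) (addb xs (a#as) c1) (addb ys bs c2) = addb (map2 (\<noteq>) xs ys) gs c3 \<and>
       t = (cout xs (a#as) c1, cout ys bs c2, cout (map2 (\<noteq>) xs ys) gs c3)"
      apply (rule exI[of _ "x#xs"], rule exI[of _ "y#ys"])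
      using xy p head_par[of x a c1 y b c2 g c3] by (simp add: bs gs)
  next
    assume "\<exists>xs ys. length xs = length (a#as) \<and> length ys = length (a#as) \<and>
       map2 (\<noteq>) (addb xs (a#as) c1) (addb ys bs c2) = addb (map2 (\<noteq>) xs ys) gs c3 \<and>
       t = (cout xs (a#as) c1, cout ys bs c2, cout (map2 (\<noteq>) xs ys) gs c3)"
    then obtain xs ys where xy: "length xs = length (a#as)" "length ys = length (a#as)"
       "map2 (\<noteq>) (addb xs (a#as) c1) (addb ys bs c2) = addb (map2 (\<noteq>) xs ys) gs c3"
       "t = (cout xs (a#as) c1, cout ys bs c2, cout (map2 (\<noteq>) xs ys) gs c3)" by blast
    obtain x xs' where xs: "xs = x # xs'" using xy(1) by (cases xs) auto
    obtain y ys' where ys: "ys = y # ys'" using xy(2) by (cases ys) auto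
    have h: "((x \<noteq> (a \<noteq> c1)) \<noteq> (y \<noteq> (b \<noteq> c2))) = ((x \<noteq> y) \<noteq> (g \<noteq> c3))"
      and tl: "map2 (\<noteq>) (addb xs' as (maj x a c1)) (addb ys' bs' (maj y b c2)) = addb (map2 (\<noteq>) xs' ys') gs' (maj (x \<noteq> y) g c3)"
      using xy(3) unfolding xs ys bs gs by simp_all
    have "t \<in> reach ?rest {(maj x a c1, maj y b c2, maj (x \<noteq> y) g c3)}"
      using Cons.IH[OF lb, of "maj x a c1" "maj y b c2" "maj (x \<noteq> y) g c3"] xy(1,2,4) tl
      unfolding xs ys bs gs by auto
    then show "par (c1,c2,c3) = par (a,b,g) \<and> (\<exists>x y. t \<in> reach ?rest {tr3 (c1,c2,c3) (a,b,g) x y})"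
      using h head_par[of x a c1 y b c2 g c3] by auto
  qed
  finally show ?case .
qed

definition rot :: "nat \<Rightarrow> bool list \<Rightarrow> bool list" where "rot m Z = drop m Z @ take m Z"

lemma EQ_list:
  assumes "length X = m + r" "length Y = m + r" "length A = m + r" "length B = m + r" "length GG = m + r"
  shows "rot m (map2 (\<noteq>) (addb X A False) (addb Y B False)) = addb (rot m (map2 (\<noteq>) X Y)) GG False
    \<longleftrightarrow> (map2 (\<noteq>) (addb (drop m X) (drop m A) (cout (take m X) (take m A) False))
                   (addb (drop m Y) (drop m B) (cout (take m Y) (take m B) False))
          = addb (map2 (\<noteq>) (drop m X) (drop m Y)) (take r GG) False
        \<and> map2 (\<noteq>) (addb (take m X) (take m A) False) (addb (take m Y) (take m B) False)
          = addb (map2 (\<noteq>) (take m X) (take m Y)) (drop r GG)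
              (cout (map2 (\<noteq>) (drop m X) (drop m Y)) (take r GG) False))"
proof -
  let ?XL = "take m X" and ?XH = "drop m X" and ?YL = "take m Y" and ?YH = "drop m Y"
  let ?AL = "take m A" and ?AH = "drop m A" and ?BL = "take m B" and ?BH = "drop m B"
  have aX: "addb X A False = addb ?XL ?AL False @ addb ?XH ?AH (cout ?XL ?AL False)"
    using addb_append[of ?XL ?AL ?XH ?AH False] assms by simp
  have aY: "addb Y B False = addb ?YL ?BL False @ addb ?YH ?BH (cout ?YL ?BL False)"
    using addb_append[of ?YL ?BL ?YH ?BH False] assms by simp
  have Z: "map2 (\<noteq>) (addb X A False) (addb Y B False)
     = map2 (\<noteq>) (addb ?XL ?AL False) (addb ?YL ?BL False) @ map2 (\<noteq>) (addb ?XH ?AH (cout ?XL ?AL False)) (addb ?YH ?BH (cout ?YL ?BL False))"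
    unfolding aX aY using assms by (simp add: zip_append)
  have lZ1: "length (map2 (\<noteq>) (addb ?XL ?AL False) (addb ?YL ?BL False)) = m" using assms by simp
  have rZ: "rot m (map2 (\<noteq>) (addb X A False) (addb Y B False))
     = map2 (\<noteq>) (addb ?XH ?AH (cout ?XL ?AL False)) (addb ?YH ?BH (cout ?YL ?BL False)) @ map2 (\<noteq>) (addb ?XL ?AL False) (addb ?YL ?BL False)"
    unfolding rot_def Z using lZ1 by simp
  have W: "map2 (\<noteq>) X Y = map2 (\<noteq>) ?XL ?YL @ map2 (\<noteq>) ?XH ?YH"
  proof -
    have "map2 (\<noteq>) X Y = map2 (\<noteq>) (?XL @ ?XH) (?YL @ ?YH)" by simp
    also have "\<dots> = map2 (\<noteq>) ?XL ?YL @ map2 (\<noteq>) ?XH ?YH" using assms by (simp del: append_take_drop_id add: zip_append)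
    finally show ?thesis .
  qed
  have rW: "rot m (map2 (\<noteq>) X Y) = map2 (\<noteq>) ?XH ?YH @ map2 (\<noteq>) ?XL ?YL"
    unfolding rot_def W using assms by simp
  have GG: "GG = take r GG @ drop r GG" by simp
  have aG: "addb (rot m (map2 (\<noteq>) X Y)) GG False = addb (map2 (\<noteq>) ?XH ?YH) (take r GG) False
       @ addb (map2 (\<noteq>) ?XL ?YL) (drop r GG) (cout (map2 (\<noteq>) ?XH ?YH) (take r GG) False)"
    unfolding rW by (subst GG, rule addb_append) (use assms in simp)
  have l1: "length (map2 (\<noteq>) (addb ?XH ?AH (cout ?XL ?AL False)) (addb ?YH ?BH (cout ?YL ?BL False))) = r"
    using assms by simp
  have l2: "length (addb (map2 (\<noteq>) ?XH ?YH) (take r GG) False) = r" using assms by simp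
  show ?thesis unfolding rZ aG using l1 l2 by (simp add: append_eq_append_conv)
qed

lemma EQ_iff:
  assumes "0 < r" "r < n" "x < 2^n" "y < 2^n" "\<alpha> < 2^n" "\<beta> < 2^n" "\<gamma> < 2^n"
  shows "rotl n r (xor ((x+\<alpha>) mod 2^n) ((y+\<beta>) mod 2^n)) = (rotl n r (xor x y) + \<gamma>) mod 2^n
    \<longleftrightarrow> rot (n-r) (map2 (\<noteq>) (addb (bitsn n x) (bitsn n \<alpha>) False) (addb (bitsn n y) (bitsn n \<beta>) False))
        = addb (rot (n-r) (map2 (\<noteq>) (bitsn n x) (bitsn n y))) (bitsn n \<gamma>) False"
proof -
  let ?p = "(x+\<alpha>) mod 2^n" and ?q = "(y+\<beta>) mod 2^n"
  have pq: "?p < 2^n" "?q < 2^n" by simp_all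
  have v: "xor ?p ?q < 2^n" by (rule xor_less[OF pq])
  have w: "xor x y < 2^n" by (rule xor_less[OF assms(3,4)])
  have L: "rotl n r (xor ?p ?q) < 2^n" using rotl_less[OF v] assms by simp
  have R: "(rotl n r (xor x y) + \<gamma>) mod 2^n < 2^n" by simp
  have eqb: "a = b \<longleftrightarrow> bitsn n a = bitsn n b" if "a < 2^n" "b < 2^n" for a b
    using bitsn_inj[OF that] by blast
  have bp: "bitsn n ?p = addb (bitsn n x) (bitsn n \<alpha>) False"
    using bitsn_add[of n x \<alpha> False] by (simp add: bitsn_mod)
  have bq: "bitsn n ?q = addb (bitsn n y) (bitsn n \<beta>) False"
    using bitsn_add[of n y \<beta> False] by (simp add: bitsn_mod)
  have bL: "bitsn n (rotl n r (xor ?p ?q)) = rot (n-r) (map2 (\<noteq>) (addb (bitsn n x) (bitsn n \<alpha>) False) (addb (bitsn n y) (bitsn n \<beta>) False))"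
    using bitsn_rotl[OF v] assms unfolding rot_def by (simp add: bitsn_xor bp bq)
  have bR: "bitsn n ((rotl n r (xor x y) + \<gamma>) mod 2^n) = addb (rot (n-r) (map2 (\<noteq>) (bitsn n x) (bitsn n y))) (bitsn n \<gamma>) False"
  proof -
    have "bitsn n ((rotl n r (xor x y) + \<gamma>) mod 2^n) = addb (bitsn n (rotl n r (xor x y))) (bitsn n \<gamma>) False"
      using bitsn_add[of n "rotl n r (xor x y)" \<gamma> False] by (simp add: bitsn_mod)
    also have "bitsn n (rotl n r (xor x y)) = rot (n-r) (map2 (\<noteq>) (bitsn n x) (bitsn n y))"
      using bitsn_rotl[OF w] assms unfolding rot_def by (simp add: bitsn_xor)
    finally show ?thesis .
  qed
  show ?thesis using eqb[OF L R] bL bR by simp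
qed

definition tLf :: "nat \<Rightarrow> nat \<Rightarrow> nat \<Rightarrow> nat \<Rightarrow> nat \<Rightarrow> st list" where
  "tLf n r \<alpha> \<beta> \<gamma> = zip (take (n-r) (bitsn n \<alpha>)) (zip (take (n-r) (bitsn n \<beta>)) (drop r (bitsn n \<gamma>)))"
definition tHf :: "nat \<Rightarrow> nat \<Rightarrow> nat \<Rightarrow> nat \<Rightarrow> nat \<Rightarrow> st list" where
  "tHf n r \<alpha> \<beta> \<gamma> = zip (drop (n-r) (bitsn n \<alpha>)) (zip (drop (n-r) (bitsn n \<beta>)) (take r (bitsn n \<gamma>)))"

lemma main_equiv:
  assumes "0 < r" "r < n" "\<alpha> < 2^n" "\<beta> < 2^n" "\<gamma> < 2^n"
  shows "(\<exists>x y. x < 2^n \<and> y < 2^n \<and> rotl n r (xor ((x+\<alpha>) mod 2^n) ((y+\<beta>) mod 2^n)) = (rotl n r (xor x y) + \<gamma>) mod 2^n)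
     \<longleftrightarrow> poss (tLf n r \<alpha> \<beta> \<gamma>) (tHf n r \<alpha> \<beta> \<gamma>)"
proof -
  define m where "m = n - r"
  have nm: "n = m + r" using assms unfolding m_def by simp
  define A where "A = bitsn n \<alpha>"
  define B where "B = bitsn n \<beta>"
  define GG where "GG = bitsn n \<gamma>"
  have lens: "length A = m + r" "length B = m + r" "length GG = m + r" unfolding A_def B_def GG_def nm by simp_all
  have tL: "tLf n r \<alpha> \<beta> \<gamma> = zip (take m A) (zip (take m B) (drop r GG))" unfolding tLf_def A_def B_def GG_def m_def ..
  have tH: "tHf n r \<alpha> \<beta> \<gamma> = zip (drop m A) (zip (drop m B) (take r GG))" unfolding tHf_def A_def B_def GG_def m_def ..
  have lL: "length (take m B) = length (take m A)" "length (drop r GG) = length (take m A)" using lens by simp_all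
  have lH: "length (drop m B) = length (drop m A)" "length (take r GG) = length (drop m A)" using lens by simp_all
  have EQ: "rotl n r (xor ((x+\<alpha>) mod 2^n) ((y+\<beta>) mod 2^n)) = (rotl n r (xor x y) + \<gamma>) mod 2^n
     \<longleftrightarrow> (map2 (\<noteq>) (addb (drop m (bitsn n x)) (drop m A) (cout (take m (bitsn n x)) (take m A) False))
                   (addb (drop m (bitsn n y)) (drop m B) (cout (take m (bitsn n y)) (take m B) False))
          = addb (map2 (\<noteq>) (drop m (bitsn n x)) (drop m (bitsn n y))) (take r GG) False
        \<and> map2 (\<noteq>) (addb (take m (bitsn n x)) (take m A) False) (addb (take m (bitsn n y)) (take m B) False)
          = addb (map2 (\<noteq>) (take m (bitsn n x)) (take m (bitsn n y))) (drop r GG)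
              (cout (map2 (\<noteq>) (drop m (bitsn n x)) (drop m (bitsn n y))) (take r GG) False))"
    if "x < 2^n" "y < 2^n" for x y
    using EQ_iff[OF assms(1,2) that assms(3,4,5)] EQ_list[of "bitsn n x" m r "bitsn n y" A B GG] lens
    unfolding A_def[symmetric] B_def[symmetric] GG_def[symmetric] m_def[symmetric] by (simp add: nm)
  show ?thesis
  proof
    assume "\<exists>x y. x < 2^n \<and> y < 2^n \<and> rotl n r (xor ((x+\<alpha>) mod 2^n) ((y+\<beta>) mod 2^n)) = (rotl n r (xor x y) + \<gamma>) mod 2^n"
    then obtain x y where xy: "x < 2^n" "y < 2^n"
      "rotl n r (xor ((x+\<alpha>) mod 2^n) ((y+\<beta>) mod 2^n)) = (rotl n r (xor x y) + \<gamma>) mod 2^n" by blast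
    define X where "X = bitsn n x"
    define Y where "Y = bitsn n y"
    have lX: "length X = m + r" "length Y = m + r" unfolding X_def Y_def nm by simp_all
    note e = EQ[OF xy(1,2), THEN iffD1, OF xy(3), folded X_def Y_def]
    define c0 where "c0 = cout (map2 (\<noteq>) (drop m X) (drop m Y)) (take r GG) False"
    define c1 where "c1 = cout (take m X) (take m A) False"
    define c2 where "c2 = cout (take m Y) (take m B) False"
    have r1: "(c1, c2, cout (map2 (\<noteq>) (take m X) (take m Y)) (drop r GG) c0) \<in> reach (tLf n r \<alpha> \<beta> \<gamma>) {(False,False,c0)}"
      unfolding tL run[OF lL] using e lX lens unfolding c0_def c1_def c2_def
      by (intro exI[of _ "take m X"] exI[of _ "take m Y"]) simp
    have r2: "(cout (drop m X) (drop m A) c1, cout (drop m Y) (drop m B) c2, c0) \<in> reach (tHf n r \<alpha> \<beta> \<gamma>) {(c1,c2,False)}"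
      unfolding tH run[OF lH] using e lX lens unfolding c0_def c1_def c2_def
      by (intro exI[of _ "drop m X"] exI[of _ "drop m Y"]) simp
    show "poss (tLf n r \<alpha> \<beta> \<gamma>) (tHf n r \<alpha> \<beta> \<gamma>)" unfolding poss_def using r1 r2 by blast
  next
    assume "poss (tLf n r \<alpha> \<beta> \<gamma>) (tHf n r \<alpha> \<beta> \<gamma>)"
    then obtain c0 c1 c2 c3 d1 d2 where p1: "(c1,c2,c3) \<in> reach (tLf n r \<alpha> \<beta> \<gamma>) {(False,False,c0)}"
      and p2: "(d1,d2,c0) \<in> reach (tHf n r \<alpha> \<beta> \<gamma>) {(c1,c2,False)}" unfolding poss_def by blast
    from p1 obtain XL YL where L: "length XL = m" "length YL = m"
      "map2 (\<noteq>) (addb XL (take m A) False) (addb YL (take m B) False) = addb (map2 (\<noteq>) XL YL) (drop r GG) c0"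
      "c1 = cout XL (take m A) False" "c2 = cout YL (take m B) False"
      unfolding tL run[OF lL] using lens by auto
    from p2 obtain XH YH where H: "length XH = r" "length YH = r"
      "map2 (\<noteq>) (addb XH (drop m A) c1) (addb YH (drop m B) c2) = addb (map2 (\<noteq>) XH YH) (take r GG) False"
      "c0 = cout (map2 (\<noteq>) XH YH) (take r GG) False"
      unfolding tH run[OF lH] using lens by auto
    obtain x where x: "x < 2^n" "bitsn n x = XL @ XH" using bitsn_surj[of "XL @ XH" n] L H nm by auto
    obtain y where y: "y < 2^n" "bitsn n y = YL @ YH" using bitsn_surj[of "YL @ YH" n] L H nm by auto
    have "rotl n r (xor ((x+\<alpha>) mod 2^n) ((y+\<beta>) mod 2^n)) = (rotl n r (xor x y) + \<gamma>) mod 2^n"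
      using EQ[OF x(1) y(1)] x(2) y(2) L H by simp
    then show "\<exists>x y. x < 2^n \<and> y < 2^n \<and> rotl n r (xor ((x+\<alpha>) mod 2^n) ((y+\<beta>) mod 2^n)) = (rotl n r (xor x y) + \<gamma>) mod 2^n"
      using x y by blast
  qed
qed

lemma zip3_map: "zip (map fst xs) (zip (map (\<lambda>x. fst (snd x)) xs) (map (\<lambda>x. snd (snd x)) xs)) = (xs :: st list)"
  by (induction xs) auto

lemma zip3_inj:
  assumes "length b = length a" "length c = length a" "length b' = length a'" "length c' = length a'"
    and "zip a (zip b c) = zip a' (zip b' c')"
  shows "a = a' \<and> b = b' \<and> c = c'"
proof -
  have 1: "a = a'" using arg_cong[OF assms(5), of "map fst"] assms(1-4) by simp
  have 2: "zip b c = zip b' c'" using arg_cong[OF assms(5), of "map snd"] assms(1-4) by simp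
  have "b = b'" using arg_cong[OF 2, of "map fst"] assms(1-4) 1 by simp
  moreover have "c = c'" using arg_cong[OF 2, of "map snd"] assms(1-4) 1 by simp
  ultimately show ?thesis using 1 by simp
qed

lemma Nzero_eq:
  assumes "0 < r" "r < n"
  shows "Nzero n r = Sn (n - r) r"
proof -
  define m where "m = n - r"
  have nm: "n = m + r" using assms unfolding m_def by simp
  define T where "T = {(\<alpha>::nat,\<beta>::nat,\<gamma>::nat). \<alpha> < 2^n \<and> \<beta> < 2^n \<and> \<gamma> < 2^n}"
  define \<Phi> where "\<Phi> = (\<lambda>(\<alpha>,\<beta>,\<gamma>). (tLf n r \<alpha> \<beta> \<gamma>, tHf n r \<alpha> \<beta> \<gamma>))"
  define P where "P = (\<lambda>p. \<not> poss (fst p) (snd p))"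
  have adp0: "adpXR n r \<alpha> \<beta> \<gamma> = 0 \<longleftrightarrow> \<not> poss (tLf n r \<alpha> \<beta> \<gamma>) (tHf n r \<alpha> \<beta> \<gamma>)"
    if "\<alpha> < 2^n" "\<beta> < 2^n" "\<gamma> < 2^n" for \<alpha> \<beta> \<gamma>
  proof -
    let ?S = "{(x, y). x < 2 ^ n \<and> y < 2 ^ n \<and>
        rotl n r (xor ((x + \<alpha>) mod 2 ^ n) ((y + \<beta>) mod 2 ^ n)) = (rotl n r (xor x y) + \<gamma>) mod 2 ^ n}"
    have fin: "finite ?S" by (rule finite_subset[of _ "{..<2^n} \<times> {..<2^n}"]) auto
    have "adpXR n r \<alpha> \<beta> \<gamma> = 0 \<longleftrightarrow> card ?S = 0" unfolding adpXR_def by simp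
    also have "\<dots> \<longleftrightarrow> ?S = {}" using fin by simp
    also have "\<dots> \<longleftrightarrow> \<not> (\<exists>x y. x < 2^n \<and> y < 2^n \<and> rotl n r (xor ((x+\<alpha>) mod 2^n) ((y+\<beta>) mod 2^n)) = (rotl n r (xor x y) + \<gamma>) mod 2^n)"
      by auto
    also have "\<dots> \<longleftrightarrow> \<not> poss (tLf n r \<alpha> \<beta> \<gamma>) (tHf n r \<alpha> \<beta> \<gamma>)"
      using main_equiv[OF assms that] by simp
    finally show ?thesis .
  qed
  have set_eq: "{(\<alpha>, \<beta>, \<gamma>). \<alpha> < 2 ^ n \<and> \<beta> < 2 ^ n \<and> \<gamma> < 2 ^ n \<and> adpXR n r \<alpha> \<beta> \<gamma> = 0} = {t\<in>T. P (\<Phi> t)}"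
    unfolding T_def P_def \<Phi>_def using adp0 by auto
  have inj: "inj_on \<Phi> T"
  proof (rule inj_onI)
    fix t t' assume tT: "t \<in> T" "t' \<in> T" and e: "\<Phi> t = \<Phi> t'"
    obtain \<alpha> \<beta> \<gamma> where t: "t = (\<alpha>,\<beta>,\<gamma>)" by (cases t)
    obtain \<alpha>' \<beta>' \<gamma>' where t': "t' = (\<alpha>',\<beta>',\<gamma>')" by (cases t')
    have b: "\<alpha> < 2^n" "\<beta> < 2^n" "\<gamma> < 2^n" "\<alpha>' < 2^n" "\<beta>' < 2^n" "\<gamma>' < 2^n" using tT t t' unfolding T_def by auto
    have eL: "tLf n r \<alpha> \<beta> \<gamma> = tLf n r \<alpha>' \<beta>' \<gamma>'" and eH: "tHf n r \<alpha> \<beta> \<gamma> = tHf n r \<alpha>' \<beta>' \<gamma>'"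
      using e unfolding t t' \<Phi>_def by auto
    have L: "take m (bitsn n \<alpha>) = take m (bitsn n \<alpha>') \<and> take m (bitsn n \<beta>) = take m (bitsn n \<beta>') \<and> drop r (bitsn n \<gamma>) = drop r (bitsn n \<gamma>')"
      by (rule zip3_inj) (use eL nm in \<open>simp_all add: tLf_def\<close>)
    have H: "drop m (bitsn n \<alpha>) = drop m (bitsn n \<alpha>') \<and> drop m (bitsn n \<beta>) = drop m (bitsn n \<beta>') \<and> take r (bitsn n \<gamma>) = take r (bitsn n \<gamma>')"
      by (rule zip3_inj) (use eH nm in \<open>simp_all add: tHf_def\<close>)
    have "bitsn n \<alpha> = bitsn n \<alpha>'" using L H by (metis append_take_drop_id)
    moreover have "bitsn n \<beta> = bitsn n \<beta>'" using L H by (metis append_take_drop_id)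
    moreover have "bitsn n \<gamma> = bitsn n \<gamma>'" using L H by (metis append_take_drop_id)
    ultimately show "t = t'" unfolding t t' using bitsn_inj b by blast
  qed
  have img: "\<Phi> ` T = lists_n m \<times> lists_n r"
  proof
    show "\<Phi> ` T \<subseteq> lists_n m \<times> lists_n r"
      unfolding \<Phi>_def T_def lists_n_def tLf_def tHf_def using nm by auto
  next
    show "lists_n m \<times> lists_n r \<subseteq> \<Phi> ` T"
    proof
      fix p assume "p \<in> lists_n m \<times> lists_n r"
      then obtain tL tH where p: "p = (tL,tH)" "length tL = m" "length tH = r" unfolding lists_n_def by auto
      define A where "A = map fst tL @ map fst tH"
      define B where "B = map (\<lambda>x. fst (snd x)) tL @ map (\<lambda>x. fst (snd x)) tH"
      define C where "C = map (\<lambda>x. snd (snd x)) tH @ map (\<lambda>x. snd (snd x)) tL"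
      have lA: "length A = n" "length B = n" "length C = n" unfolding A_def B_def C_def using p nm by auto
      have bA: "bitsn n (ofb A) = A" "bitsn n (ofb B) = B" "bitsn n (ofb C) = C"
        using bitsn_ofb[of A] bitsn_ofb[of B] bitsn_ofb[of C] lA by simp_all
      have lt: "ofb A < 2^n" "ofb B < 2^n" "ofb C < 2^n" using ofb_less[of A] ofb_less[of B] ofb_less[of C] lA by simp_all
      have "tLf n r (ofb A) (ofb B) (ofb C) = tL"
        unfolding tLf_def bA m_def[symmetric] using p zip3_map[of tL] unfolding A_def B_def C_def by simp
      moreover have "tHf n r (ofb A) (ofb B) (ofb C) = tH"
        unfolding tHf_def bA m_def[symmetric] using p zip3_map[of tH] unfolding A_def B_def C_def by simp
      ultimately have "\<Phi> (ofb A, ofb B, ofb C) = p" unfolding \<Phi>_def p by simp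
      moreover have "(ofb A, ofb B, ofb C) \<in> T" unfolding T_def using lt by simp
      ultimately show "p \<in> \<Phi> ` T" by blast
    qed
  qed
  have "Nzero n r = card {t\<in>T. P (\<Phi> t)}" unfolding Nzero_def set_eq ..
  also have "\<dots> = card (\<Phi> ` {t\<in>T. P (\<Phi> t)})"
    by (rule card_image[symmetric]) (rule inj_on_subset[OF inj], auto)
  also have "\<Phi> ` {t\<in>T. P (\<Phi> t)} = {p \<in> \<Phi> ` T. P p}" by blast
  also have "\<dots> = {p \<in> lists_n m \<times> lists_n r. P p}" unfolding img ..
  also have "card {p \<in> lists_n m \<times> lists_n r. P p} = (\<Sum>p\<in>lists_n m \<times> lists_n r. of_bool (P p))"
  proof -
    have "(\<Sum>p\<in>lists_n m \<times> lists_n r. of_bool (P p) :: nat) = (\<Sum>p\<in>{p \<in> lists_n m \<times> lists_n r. P p}. 1)"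
      by (rule sum.mono_neutral_cong_right) auto
    then show ?thesis by simp
  qed
  also have "\<dots> = Sn m r" by (simp only: Sn_def P_def sum.cartesian_product split_def)
  finally show ?thesis unfolding m_def .
qed

lemma claim4: assumes "n \<ge> 2" shows "real (Sn (n - 1) 1) = (5/14) * 8 ^ n - 6/7"
proof -
  define j where "j = n - 2"
  have n: "n = Suc (Suc j)" using assms unfolding j_def by simp
  have "n - 1 = Suc j" using n by simp
  then have "real (Sn (n - 1) 1) = 160/7 * 8^j - 6/7" using S4[of j] by simp
  moreover have "(8::real)^n = 64 * 8^j" using n by simp
  ultimately show ?thesis by simp
qed

lemma claim3: assumes "1 \<le> r" "r \<le> n - 1"
  shows "real (Sn (n - r) r) \<ge> (1/7) * 8 ^ n - (1/7) * 8 ^ r"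
proof -
  define j where "j = n - r - 1"
  have j: "n - r = Suc j" using assms unfolding j_def by simp
  have n: "n = Suc j + r" using j assms by linarith
  have "2 * Ad r + 2 * 8^r * Ad j \<le> Sn (n - r) r" using S3[of r j] j by simp
  then have "real (2 * Ad r + 2 * 8^r * Ad j) \<le> real (Sn (n - r) r)" by (rule of_nat_mono)
  then have h1: "2 * real (Ad r) + 2 * ((8::real)^r * real (Ad j)) \<le> real (Sn (n - r) r)" by (simp add: mult.assoc)
  have h2: "7 * ((8::real)^r * real (Ad j)) = 4 * ((8::real)^r * 8^j - 8^r)"
  proof -
    have "(8::real)^r * (7 * real (Ad j)) = 8^r * (4 * (8^j - 1))" using Ad_real[of j] by simp
    then show ?thesis by (simp add: algebra_simps)
  qed
  have h3: "(8::real)^n = 8 * ((8::real)^r * 8^j)" using n by (simp add: power_add)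
  have h4: "(8::real)^r \<ge> 8"
  proof -
    have "(8::real)^1 \<le> 8^r" by (rule power_increasing) (use assms(1) in auto)
    then show ?thesis by simp
  qed
  have h5: "7 * real (Ad r) = 4 * (8^r - 1)" by (rule Ad_real)
  define A where "A = (8::real)^r * real (Ad j)"
  define B where "B = (8::real)^r * 8^j"
  have h2': "7 * A = 4 * (B - 8^r)" using h2 unfolding A_def B_def .
  have h1': "2 * real (Ad r) + 2 * A \<le> real (Sn (n - r) r)" using h1 unfolding A_def .
  have h3': "(8::real)^n = 8 * B" using h3 unfolding B_def .
  show ?thesis using h1' h2' h3' h4 h5 by argo
qed

lemma claim2: assumes "n \<ge> 2"
  shows "real (Sn (n - (n - 1)) (n - 1)) \<le> (9/28 + 1 / 2 ^ n) * 8 ^ n - 88/7"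
proof -
  define r0 where "r0 = n - 2"
  have n: "n = Suc (Suc r0)" using assms unfolding r0_def by simp
  have e1: "n - (n - 1) = Suc 0" "n - 1 = Suc r0" using n by simp_all
  have "Sn (Suc 0) (Suc r0) \<le> 2 * (8^Suc r0 * Ad 0 + Ad (Suc r0) + Ad r0 * (G 0 kw CS + G 0 kw CF4 + 2 * G 0 kw CT2)) + 4 * 8^0 * 4^(Suc r0)"
    by (rule SU)
  then have "Sn (Suc 0) (Suc r0) \<le> 8 * 8^r0 + 10 * Ad r0 + 4^n" using n by (simp add: kw_def)
  then have "real (Sn (Suc 0) (Suc r0)) \<le> real (8 * 8^r0 + 10 * Ad r0 + 4^n)" by (rule of_nat_mono)
  moreover have "Sn (n - (n - 1)) (n - 1) = Sn (Suc 0) (Suc r0)" using n by simp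
  ultimately have h1: "real (Sn (n - (n - 1)) (n - 1)) \<le> 8 * 8^r0 + 10 * real (Ad r0) + 4^n" by simp
  have h2: "7 * real (Ad r0) = 4 * (8^r0 - 1)" by (rule Ad_real)
  have h3: "(9/28 + 1 / 2 ^ n) * (8::real) ^ n = 144/7 * 8^r0 + 4^n"
  proof -
    have a: "(8::real)^n = 64 * 8^r0" using n by simp
    have b: "(8::real)^n / 2^n = 4^n" by (simp add: power_divide[symmetric])
    have "(9/28 + 1 / 2 ^ n) * (8::real) ^ n = 9/28 * 8^n + 8^n / 2^n" by (simp add: field_simps)
    then show ?thesis using a b by simp
  qed
  have h4: "(1::real) \<le> 8^r0" by simp
  show ?thesis using h1 h2 h3 h4 by argo
qed

lemma claim1: assumes "2 \<le> r" "r \<le> n - 2"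
  shows "real (Sn (n - r) r) \<le> (1/7 + 1 / 2 ^ (r + 1)) * 8 ^ n - (1/7) * 8 ^ r
              + (4/7) * (8 ^ (r - 1) - 1) *
                ((1/5) * 8 ^ (n - r) + 7 * 4 ^ (n - r) - (124/5) * 3 ^ (n - r - 2))"
proof -
  define r0 where "r0 = r - 1"
  define i where "i = n - r - 2"
  define j where "j = Suc i"
  have r: "r = Suc r0" using assms unfolding r0_def by simp
  have nr: "n - r = Suc j" using assms unfolding i_def j_def by simp
  have n: "n = Suc j + r" using nr assms by linarith
  define bb where "bb = (4/7) * (8 ^ (r - 1) - 1::real)"
  define pr where "pr = (1/5) * 8 ^ (n - r) + 7 * 4 ^ (n - r) - (124/5) * (3::real) ^ (n - r - 2)"
  have bbA: "bb = real (Ad r0)" using Ad_real[of r0] unfolding bb_def r0_def by simp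
  define V where "V = real (G j kw CS + G j kw CF4 + 2 * G j kw CT2)"
  have "Sn (Suc j) (Suc r0) \<le> 2 * (8^Suc r0 * Ad j + Ad (Suc r0) + Ad r0 * (G j kw CS + G j kw CF4 + 2 * G j kw CT2)) + 4 * 8^j * 4^(Suc r0)"
    by (rule SU)
  then have "real (Sn (Suc j) (Suc r0)) \<le> real (2 * (8^Suc r0 * Ad j + Ad (Suc r0) + Ad r0 * (G j kw CS + G j kw CF4 + 2 * G j kw CT2)) + 4 * 8^j * 4^(Suc r0))"
    by (rule of_nat_mono)
  note hS = this
  have h1: "real (Sn (n - r) r) \<le> 2 * ((8::real)^r * real (Ad j)) + 2 * (4 * 8^r0 + bb) + 2 * (bb * V) + 4 * ((8::real)^j * 4^r)"
  proof -
    have Seq: "Sn (n - Suc r0) (Suc r0) = Sn (Suc j) (Suc r0)" using nr r by simp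
    show ?thesis using hS Seq unfolding bbA V_def r by (simp add: algebra_simps)
  qed
  have h2: "7 * ((8::real)^r * real (Ad j)) = 4 * ((8::real)^r * 8^j) - 4 * 8^r"
  proof -
    have "(8::real)^r * (7 * real (Ad j)) = 8^r * (4 * (8^j - 1))" using Ad_real[of j] by simp
    then show ?thesis by (simp add: algebra_simps)
  qed
  have h3: "(1/7 + 1 / 2 ^ (r + 1)) * (8::real) ^ n = 8/7 * ((8::real)^r * 8^j) + 4 * ((8::real)^j * 4^r)"
  proof -
    have a: "(8::real)^n = 8 * ((8::real)^r * 8^j)" using n by (simp add: power_add)
    have b: "(8::real)^r / 2^r = 4^r" by (simp add: power_divide[symmetric])
    have c: "(8::real)^n / 2^(r+1) = 4 * ((8::real)^j * 4^r)"
    proof -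
      have "(8::real)^n / 2^(r+1) = 4 * 8^j * (8^r / 2^r)" using n by (simp add: power_add field_simps)
      then show ?thesis using b by simp
    qed
    have "(1/7 + 1 / 2 ^ (r + 1)) * (8::real) ^ n = 8^n / 7 + 8^n / 2^(r+1)" by (simp add: field_simps)
    then show ?thesis using a c by simp
  qed
  have h4: "(8::real)^r = 8 * 8^r0" using r by simp
  have k1: "105 * real (G j kw CS) + 84 * 3^j + 100 = 9 * 8^j + 175 * 4^j"
    using G_kw_CS[of j] by (metis (mono_tags) of_nat_add of_nat_mult of_nat_numeral of_nat_power)
  have k2: "15 * real (G j kw CF4) + 8 * 3^j = 3 * 8^j + 15 * 4^j"
    using conjunct1[OF conjunct2[OF conjunct2[OF conjunct2[OF G_kw[of i]]]]] unfolding j_def[symmetric]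
    by (metis (mono_tags) of_nat_add of_nat_mult of_nat_numeral of_nat_power)
  have k3: "15 * real (G j kw CT2) + 8 * 3^j = 3 * 8^j + 30 * 4^j"
    using conjunct2[OF conjunct2[OF conjunct2[OF conjunct2[OF G_kw[of i]]]]] unfolding j_def[symmetric]
    by (metis (mono_tags) of_nat_add of_nat_mult of_nat_numeral of_nat_power)
  have k4: "(3::real)^j \<le> 4^j" by (rule power_mono) simp_all
  have k5: "(1::real) \<le> 8^j" by simp
  have k6: "(0::real) \<le> 3^j" by simp
  have p: "pr = 8/5 * 8^j + 28 * 4^j - 124/15 * 3^j"
  proof -
    have "n - r - 2 = i" unfolding i_def by simp
    moreover have "(3::real)^j = 3 * 3^i" unfolding j_def by simp
    ultimately show ?thesis unfolding pr_def nr by simp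
  qed
  have Vk: "V = real (G j kw CS) + real (G j kw CF4) + 2 * real (G j kw CT2)" unfolding V_def by simp
  have "2 + 2 * V \<le> pr" using k1 k2 k3 k4 k5 k6 p Vk by argo
  moreover have "0 \<le> bb" unfolding bbA by simp
  ultimately have "bb * (2 + 2 * V) \<le> bb * pr" by (rule mult_left_mono)
  then have h5: "2 * bb + 2 * (bb * V) \<le> bb * pr" by (simp add: algebra_simps)
  have h6: "7 * bb = 4 * 8^r0 - 4" unfolding bbA using Ad_real[of r0] by simp
  have goal: "real (Sn (n - r) r) \<le> (1/7 + 1 / 2 ^ (r + 1)) * 8 ^ n - (1/7) * 8 ^ r + bb * pr"
    using h1 h2 h3 h4 h5 h6 by argo
  then show ?thesis unfolding bb_def pr_def by simp
qed

theorem corollary5: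
  fixes n :: nat
  assumes "n \<ge> 2"
  shows "(\<forall>r. 2 \<le> r \<and> r \<le> n - 2 \<longrightarrow>
            real (Nzero n r) \<le> (1/7 + 1 / 2 ^ (r + 1)) * 8 ^ n - (1/7) * 8 ^ r
              + (4/7) * (8 ^ (r - 1) - 1) *
                ((1/5) * 8 ^ (n - r) + 7 * 4 ^ (n - r) - (124/5) * 3 ^ (n - r - 2)))
       \<and> real (Nzero n (n - 1)) \<le> (9/28 + 1 / 2 ^ n) * 8 ^ n - 88/7
       \<and> (\<forall>r. 1 \<le> r \<and> r \<le> n - 1 \<longrightarrow> real (Nzero n r) \<ge> (1/7) * 8 ^ n - (1/7) * 8 ^ r)
       \<and> real (Nzero n 1) = (5/14) * 8 ^ n - 6/7"
proof (intro conjI allI impI)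
  fix r assume r: "2 \<le> r \<and> r \<le> n - 2"
  then have "Nzero n r = Sn (n - r) r" using assms by (intro Nzero_eq) auto
  then show "real (Nzero n r) \<le> (1/7 + 1 / 2 ^ (r + 1)) * 8 ^ n - (1/7) * 8 ^ r
              + (4/7) * (8 ^ (r - 1) - 1) *
                ((1/5) * 8 ^ (n - r) + 7 * 4 ^ (n - r) - (124/5) * 3 ^ (n - r - 2))"
    using claim1[of r n] r by simp
next
  have "Nzero n (n - 1) = Sn (n - (n - 1)) (n - 1)" using assms by (intro Nzero_eq) auto
  then show "real (Nzero n (n - 1)) \<le> (9/28 + 1 / 2 ^ n) * 8 ^ n - 88/7"
    using claim2[OF assms] by simp
next
  fix r assume r: "1 \<le> r \<and> r \<le> n - 1"
  then have "Nzero n r = Sn (n - r) r" using assms by (intro Nzero_eq) auto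
  then show "real (Nzero n r) \<ge> (1/7) * 8 ^ n - (1/7) * 8 ^ r"
    using claim3[of r n] r by simp
next
  have "Nzero n 1 = Sn (n - 1) 1" using assms by (intro Nzero_eq) auto
  then show "real (Nzero n 1) = (5/14) * 8 ^ n - 6/7" using claim4[OF assms] by simp
qed

end
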